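(* Let $H_1,H_2,\widetilde{\mathcal H}$ be complex Hilbert spaces. Then for all nonzero $A\in\mathcal{B}_2(\widetilde{\mathcal H},H_1)$ and $B\in\mathcal{B}_2(\widetilde{\mathcal H}^{\#},H_2)$, \[ AA^*\otimes BB^*\;\succcurlyeq\;\frac{1}{\min(\operatorname{rk}AA^*,\operatorname{rk}BB^* )}\,\theta_{\mathrm{vec}(BA^\#),\mathrm{vec}(BA^\#)}\;\succcurlyeq\;0 \] as operators on $H_1\otimes H_2$, with the convention $1/\infty:=0$. Moreover, $1/\min(\operatorname{rk}AA^*,\operatorname{rk}BB^* )$ is the best possible scalar, i.e., it cannot be improved uniformly over $A,B$.
   Context: All Hilbert spaces are complex, with inner products linear in the first variable. $\mathcal{B}(H,K)\supset\mathcal{B}_2(H,K)\supset\mathcal{B}_1(H,K)$ denote bounded, Hilbert–Schmidt and trace-class operators; $\mathcal{B}_2(H,K)$ carries the inner product $\langle X,Y\rangle=\operatorname{Tr}(XY^* )$. For $x\in K$, $y\in H$, $\theta_{x,y}:H\to K$ is the rank-one operator $\theta_{x,y}w=\langle w,y\rangle x$. The conjugate space $H^\#$ of $H$ has the same additive group as $H$, scalar multiplication $\lambda\ast y:=\bar\lambda y$ and inner product $\langle x,y\rangle_{H^\#}:=\langle y,x\rangle_H$; the conjugation map $\mathcal{C}_H:H\to H^\#$, $y\mapsto\bar y$, is the identity on the underlying set (a conjugate-linear isometric bijection). For $Q\in\mathcal{B}(K,H)$, its transposition is $Q^\#:=\mathcal{C}_K Q^*\mathcal{C}_H^{-1}:H^\#\to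 K^\#$. The vectorization $\mathrm{vec}:\mathcal{B}_2(H^\#,K)\to H\otimes K$ is the isometric isomorphism determined by $\mathrm{vec}(\theta_{y,\bar x})=x\otimes y$ ($x\in H,y\in K$), extended linearly and continuously. $H\otimes K$ is the Hilbert tensor product and $P\otimes Q$ the tensor product of bounded operators. The rank $\operatorname{rk}P$ of a bounded operator is the dimension of the closure of its range. For self-adjoint operators, $X\succcurlyeq Y$ means $\langle (X-Y)x,x\rangle\ge0$ for all $x$. *)

theory Defs
  imports "HOL-Analysis.Analysis" "HOL-Library.Complex_Order" "HOL-Library.Extended_Nat"
begin

(* Concrete model: a complex Hilbert space with orthonormal basis indexed by the
   type 'i is l2('i), vectors are functions 'i => complex that are square-summable.
   The Hilbert tensor product of l2('i) and l2('j) is l2('i \<times> 'j), with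
   (x \<otimes> y)(i,j) = x i * y j. The conjugate space H# has the same carrier as H,
   so maps out of H# are modelled as conjugate-linear maps on the carrier of H. *)

definition l2 :: "('i \<Rightarrow> complex) \<Rightarrow> bool" where
  "l2 x \<longleftrightarrow> (\<lambda>i. (cmod (x i))^2) summable_on UNIV"

definition l2_inner :: "('i \<Rightarrow> complex) \<Rightarrow> ('i \<Rightarrow> complex) \<Rightarrow> complex" where
  "l2_inner x y = infsum (\<lambda>i. x i * cnj (y i)) UNIV"

definition l2_norm :: "('i \<Rightarrow> complex) \<Rightarrow> real" where
  "l2_norm x = sqrt (infsum (\<lambda>i. (cmod (x i))^2) UNIV)"

definition ket :: "'i \<Rightarrow> 'i \<Rightarrow> complex" where
  "ket k = (\<lambda>i. if i = k then 1 else 0)"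

definition tensor_vec :: "('i \<Rightarrow> complex) \<Rightarrow> ('j \<Rightarrow> complex) \<Rightarrow> ('i \<times> 'j \<Rightarrow> complex)" where
  "tensor_vec x y = (\<lambda>(i, j). x i * y j)"

(* bounded linear operator l2('a) -> l2('b) (values off l2 are irrelevant) *)
definition bounded_op :: "(('a \<Rightarrow> complex) \<Rightarrow> ('b \<Rightarrow> complex)) \<Rightarrow> bool" where
  "bounded_op T \<longleftrightarrow>
     (\<forall>x. l2 x \<longrightarrow> l2 (T x)) \<and>
     (\<forall>x y. l2 x \<longrightarrow> l2 y \<longrightarrow> T (\<lambda>i. x i + y i) = (\<lambda>p. T x p + T y p)) \<and>
     (\<forall>c x. l2 x \<longrightarrow> T (\<lambda>i. c * x i) = (\<lambda>p. c * T x p)) \<and>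
     (\<exists>C. \<forall>x. l2 x \<longrightarrow> l2_norm (T x) \<le> C * l2_norm x)"

(* bounded linear operator l2('a)# -> l2('b): on the common carrier it is
   additive and satisfies T(\<lambda> * y) = \<lambda> T y, where \<lambda> * y = cnj \<lambda> y *)
definition bounded_op_conj :: "(('a \<Rightarrow> complex) \<Rightarrow> ('b \<Rightarrow> complex)) \<Rightarrow> bool" where
  "bounded_op_conj T \<longleftrightarrow>
     (\<forall>x. l2 x \<longrightarrow> l2 (T x)) \<and>
     (\<forall>x y. l2 x \<longrightarrow> l2 y \<longrightarrow> T (\<lambda>i. x i + y i) = (\<lambda>p. T x p + T y p)) \<and>
     (\<forall>c x. l2 x \<longrightarrow> T (\<lambda>i. cnj c * x i) = (\<lambda>p. c * T x p)) \<and>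
     (\<exists>C. \<forall>x. l2 x \<longrightarrow> l2_norm (T x) \<le> C * l2_norm x)"

(* Hilbert-Schmidt: sum over an orthonormal basis of ||T e_k||^2 is finite.
   The vectors ket k form an orthonormal basis both of l2('a) and of l2('a)#. *)
definition hs_op :: "(('a \<Rightarrow> complex) \<Rightarrow> ('b \<Rightarrow> complex)) \<Rightarrow> bool" where
  "hs_op T \<longleftrightarrow> bounded_op T \<and> (\<lambda>k. (l2_norm (T (ket k)))^2) summable_on UNIV"

definition hs_op_conj :: "(('a \<Rightarrow> complex) \<Rightarrow> ('b \<Rightarrow> complex)) \<Rightarrow> bool" where
  "hs_op_conj T \<longleftrightarrow> bounded_op_conj T \<and> (\<lambda>k. (l2_norm (T (ket k)))^2) summable_on UNIV"

definition nonzero_op :: "(('a \<Rightarrow> complex) \<Rightarrow> ('b \<Rightarrow> complex)) \<Rightarrow> bool" where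
  "nonzero_op T \<longleftrightarrow> (\<exists>x. l2 x \<and> T x \<noteq> (\<lambda>_. 0))"

(* adjoint of a linear operator T : l2('a) -> l2('b): <T* y, e_k> = <y, T e_k> *)
definition adj :: "(('a \<Rightarrow> complex) \<Rightarrow> ('b \<Rightarrow> complex)) \<Rightarrow> ('b \<Rightarrow> complex) \<Rightarrow> ('a \<Rightarrow> complex)" where
  "adj T y = (\<lambda>k. l2_inner y (T (ket k)))"

(* adjoint of an operator T : l2('a)# -> l2('b), as a map into the carrier of l2('a)#:
   T* y = sum_k cnj <T* y, e_k>_# e_k = sum_k <T e_k, y> e_k *)
definition adj_conj :: "(('a \<Rightarrow> complex) \<Rightarrow> ('b \<Rightarrow> complex)) \<Rightarrow> ('b \<Rightarrow> complex) \<Rightarrow> ('a \<Rightarrow> complex)" where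
  "adj_conj T y = (\<lambda>k. l2_inner (T (ket k)) y)"

(* transposition Q# = C_K Q* C_H^{-1}; conjugation maps are the identity on carriers *)
definition transp :: "(('a \<Rightarrow> complex) \<Rightarrow> ('b \<Rightarrow> complex)) \<Rightarrow> ('b \<Rightarrow> complex) \<Rightarrow> ('a \<Rightarrow> complex)" where
  "transp Q = adj Q"

(* vec : B2(l2('i)#, l2('j)) -> l2('i) \<otimes> l2('j); this is the continuous linear
   extension of vec(theta_{y, cnj x}) = x \<otimes> y *)
definition vec :: "(('i \<Rightarrow> complex) \<Rightarrow> ('j \<Rightarrow> complex)) \<Rightarrow> ('i \<times> 'j \<Rightarrow> complex)" where
  "vec X = (\<lambda>(i, j). X (ket i) j)"

definition theta :: "('b \<Rightarrow> complex) \<Rightarrow> ('a \<Rightarrow> complex) \<Rightarrow> ('a \<Rightarrow> complex) \<Rightarrow> ('b \<Rightarrow> complex)" where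
  "theta x y = (\<lambda>w p. l2_inner w y * x p)"

definition tensor_op ::
  "(('i \<Rightarrow> complex) \<Rightarrow> ('i2 \<Rightarrow> complex)) \<Rightarrow> (('j \<Rightarrow> complex) \<Rightarrow> ('j2 \<Rightarrow> complex))
    \<Rightarrow> ('i \<times> 'j \<Rightarrow> complex) \<Rightarrow> ('i2 \<times> 'j2 \<Rightarrow> complex)" where
  "tensor_op P Q = (\<lambda>w (i, j). infsum (\<lambda>(i', j'). P (ket i') i * Q (ket j') j * w (i', j')) UNIV)"

definition scale_op :: "real \<Rightarrow> (('a \<Rightarrow> complex) \<Rightarrow> ('b \<Rightarrow> complex)) \<Rightarrow> ('a \<Rightarrow> complex) \<Rightarrow> ('b \<Rightarrow> complex)" where
  "scale_op c T = (\<lambda>w p. complex_of_real c * T w p)"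

definition zero_op :: "('a \<Rightarrow> complex) \<Rightarrow> ('b \<Rightarrow> complex)" where
  "zero_op = (\<lambda>w p. 0)"

(* X \<succcurlyeq> Y :  <(X - Y) w, w> \<ge> 0 for all w (complex order: real and nonnegative) *)
definition loewner_ge :: "(('a \<Rightarrow> complex) \<Rightarrow> ('a \<Rightarrow> complex)) \<Rightarrow> (('a \<Rightarrow> complex) \<Rightarrow> ('a \<Rightarrow> complex)) \<Rightarrow> bool" where
  "loewner_ge X Y \<longleftrightarrow> (\<forall>w. l2 w \<longrightarrow> 0 \<le> l2_inner (\<lambda>p. X w p - Y w p) w)"

(* rank = dimension (possibly infinite) of the closure of the range *)
definition l2_closure :: "('i \<Rightarrow> complex) set \<Rightarrow> ('i \<Rightarrow> complex) set" where
  "l2_closure S = {x. l2 x \<and> (\<forall>e>0. \<exists>y\<in>S. l2_norm (\<lambda>i. x i - y i) < e)}"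

definition lin_indep :: "('i \<Rightarrow> complex) set \<Rightarrow> bool" where
  "lin_indep S \<longleftrightarrow> finite S \<and>
     (\<forall>c. (\<lambda>i. \<Sum>s\<in>S. c s * s i) = (\<lambda>i. 0) \<longrightarrow> (\<forall>s\<in>S. c s = 0))"

definition op_rank :: "(('a \<Rightarrow> complex) \<Rightarrow> ('b \<Rightarrow> complex)) \<Rightarrow> enat" where
  "op_rank T = Sup {enat (card S) | S. S \<subseteq> l2_closure {T x | x. l2 x} \<and> lin_indep S}"

definition inv_enat :: "enat \<Rightarrow> real" where
  "inv_enat m = (case m of enat n \<Rightarrow> 1 / real n | \<infinity> \<Rightarrow> 0)"

definition AAs :: "(('k \<Rightarrow> complex) \<Rightarrow> ('i \<Rightarrow> complex)) \<Rightarrow> ('i \<Rightarrow> complex) \<Rightarrow> ('i \<Rightarrow> complex)" where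
  "AAs A = A \<circ> adj A"

definition BBs :: "(('k \<Rightarrow> complex) \<Rightarrow> ('j \<Rightarrow> complex)) \<Rightarrow> ('j \<Rightarrow> complex) \<Rightarrow> ('j \<Rightarrow> complex)" where
  "BBs B = B \<circ> adj_conj B"

definition min_rank :: "(('k \<Rightarrow> complex) \<Rightarrow> ('i \<Rightarrow> complex)) \<Rightarrow> (('k \<Rightarrow> complex) \<Rightarrow> ('j \<Rightarrow> complex)) \<Rightarrow> enat" where
  "min_rank A B = min (op_rank (AAs A)) (op_rank (BBs B))"

end

theory Submission
  imports Defs "HOL-Library.Function_Algebras"
begin

definition nsq :: "('a \<Rightarrow> complex) \<Rightarrow> real" where
  "nsq x = infsum (\<lambda>i. (cmod (x i))^2) UNIV"

lemma nsq_nonneg: "0 \<le> nsq x"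
  unfolding nsq_def by (rule infsum_nonneg) auto

lemma l2_norm_nsq: "l2_norm x = sqrt (nsq x)"
  unfolding l2_norm_def nsq_def ..

lemma l2_has_sum: "l2 x \<Longrightarrow> ((\<lambda>i. (cmod (x i))^2) has_sum nsq x) UNIV"
  unfolding l2_def nsq_def by (simp add: summable_iff_has_sum_infsum)

lemma l2_coord_le: assumes "l2 x" shows "(cmod (x i))^2 \<le> nsq x"
proof -
  have "sum (\<lambda>i. (cmod (x i))^2) {i} \<le> nsq x"
    using finite_sum_le_has_sum[OF l2_has_sum[OF assms], of "{i}"] by auto
  then show ?thesis by simp
qed

lemma l2_coord_le': assumes "l2 x" shows "cmod (x i) \<le> sqrt (nsq x)"
  using l2_coord_le[OF assms, of i] real_le_rsqrt by blast

lemma l2_comparison: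
  assumes "l2 x" "\<And>i. cmod (y i) \<le> c * cmod (x i)"
  shows "l2 y"
proof -
  have "(\<lambda>i. c^2 * (cmod (x i))^2) summable_on UNIV"
    using assms(1) unfolding l2_def by (intro summable_on_cmult_right)
  moreover have "(cmod (y i))^2 \<le> c^2 * (cmod (x i))^2" for i
  proof -
    have "(cmod (y i))^2 \<le> (c * cmod (x i))^2"
      by (rule power_mono[OF assms(2)]) auto
    then show ?thesis by (simp add: power_mult_distrib)
  qed
  ultimately show ?thesis unfolding l2_def
    by (rule summable_on_comparison_test) auto
qed

lemma l2_zero[simp]: "l2 (\<lambda>_. 0)"
  unfolding l2_def by simp

lemma l2_scale: "l2 x \<Longrightarrow> l2 (\<lambda>i. c * x i)"
  by (rule l2_comparison[where c="cmod c"]) (auto simp: norm_mult)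

lemma l2_cnj: "l2 x \<Longrightarrow> l2 (\<lambda>i. cnj (x i))"
  by (rule l2_comparison[where c=1]) auto

lemma l2_add: assumes "l2 x" "l2 y" shows "l2 (\<lambda>i. x i + y i)"
proof -
  have "(\<lambda>i. 2 * (cmod (x i))^2 + 2 * (cmod (y i))^2) summable_on UNIV"
    using assms unfolding l2_def
    by (intro summable_on_add summable_on_cmult_right) auto
  moreover have "(cmod (x i + y i))^2 \<le> 2 * (cmod (x i))^2 + 2 * (cmod (y i))^2" for i
  proof -
    have "(cmod (x i + y i))^2 \<le> (cmod (x i) + cmod (y i))^2"
      by (rule power_mono[OF norm_triangle_ineq]) auto
    also have "\<dots> \<le> 2 * (cmod (x i))^2 + 2 * (cmod (y i))^2"
      using zero_le_power2[of "cmod (x i) - cmod (y i)"] unfolding power2_sum power2_diff by linarith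
    finally show ?thesis .
  qed
  ultimately show ?thesis unfolding l2_def
    by (rule summable_on_comparison_test) auto
qed

lemma l2_diff: assumes "l2 x" "l2 y" shows "l2 (\<lambda>i. x i - y i)"
  using l2_add[OF assms(1) l2_scale[OF assms(2), of "-1"]] by simp

lemma l2_sum: "finite F \<Longrightarrow> (\<And>s. s \<in> F \<Longrightarrow> l2 (f s)) \<Longrightarrow> l2 (\<lambda>i. \<Sum>s\<in>F. f s i)"
  by (induction F rule: finite_induct) (auto intro: l2_add)

lemma l2_finite_support:
  assumes "finite S" "\<And>i. i \<notin> S \<Longrightarrow> x i = 0" shows "l2 x"
proof -
  have "(\<lambda>i. (cmod (x i))^2) summable_on S" using assms(1) by simp
  then show ?thesis unfolding l2_def
    by (rule summable_on_cong_neutral[THEN iffD1, rotated -1]) (auto simp: assms(2))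
qed

lemma l2_ket[simp]: "l2 (ket k)"
  by (rule l2_finite_support[of "{k}"]) (auto simp: ket_def)

lemma nsq_finite_support:
  assumes "finite S" "\<And>i. i \<notin> S \<Longrightarrow> x i = 0" shows "nsq x = (\<Sum>i\<in>S. (cmod (x i))^2)"
proof -
  have "infsum (\<lambda>i. (cmod (x i))^2) UNIV = infsum (\<lambda>i. (cmod (x i))^2) S"
    by (rule infsum_cong_neutral) (auto simp: assms(2))
  then show ?thesis using assms(1) unfolding nsq_def by simp
qed

lemma nsq_ket[simp]: "nsq (ket k) = 1"
  by (subst nsq_finite_support[of "{k}"]) (auto simp: ket_def)

lemma nsq_scale: "l2 x \<Longrightarrow> nsq (\<lambda>i. c * x i) = (cmod c)^2 * nsq x"
  unfolding nsq_def l2_def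
  by (simp add: norm_mult power_mult_distrib infsum_cmult_right')

lemma nsq_cnj[simp]: "nsq (\<lambda>i. cnj (x i)) = nsq x"
  unfolding nsq_def by simp

lemma nsq_eq_0:
  assumes "l2 x" "nsq x = 0" shows "x = (\<lambda>_. 0)"
proof
  fix i
  have "(cmod (x i))^2 \<le> 0" using l2_coord_le[OF assms(1), of i] assms(2) by simp
  then show "x i = 0" by simp
qed

lemma cs_summable:
  assumes "l2 x" "l2 y"
  shows "(\<lambda>i. cmod (x i) * cmod (y i)) summable_on UNIV"
    and "infsum (\<lambda>i. cmod (x i) * cmod (y i)) UNIV \<le> sqrt (nsq x) * sqrt (nsq y)"
proof -
  have bnd: "sum (\<lambda>i. cmod (x i) * cmod (y i)) F \<le> sqrt (nsq x) * sqrt (nsq y)" if "finite F" for F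
  proof -
    have "(sum (\<lambda>i. cmod (x i) * cmod (y i)) F)^2 \<le> (\<Sum>i\<in>F. (cmod (x i))^2) * (\<Sum>i\<in>F. (cmod (y i))^2)"
      by (rule Cauchy_Schwarz_ineq_sum)
    also have "\<dots> \<le> nsq x * nsq y"
      using finite_sum_le_has_sum[OF l2_has_sum[OF assms(1)] that]
            finite_sum_le_has_sum[OF l2_has_sum[OF assms(2)] that]
      by (intro mult_mono) (auto intro: sum_nonneg simp: nsq_nonneg)
    finally have "(sum (\<lambda>i. cmod (x i) * cmod (y i)) F)^2 \<le> (sqrt (nsq x) * sqrt (nsq y))^2"
      by (simp add: power_mult_distrib nsq_nonneg)
    then show ?thesis
      by (rule power2_le_imp_le) (auto simp: nsq_nonneg)
  qed
  show s: "(\<lambda>i. cmod (x i) * cmod (y i)) summable_on UNIV"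
    by (rule nonneg_bdd_above_summable_on) (auto intro!: bdd_aboveI2 bnd)
  show "infsum (\<lambda>i. cmod (x i) * cmod (y i)) UNIV \<le> sqrt (nsq x) * sqrt (nsq y)"
    by (rule infsum_le_finite_sums[OF s]) (auto intro: bnd)
qed

lemma inner_summable:
  assumes "l2 x" "l2 y" shows "(\<lambda>i. x i * cnj (y i)) summable_on UNIV"
proof -
  have "(\<lambda>i. norm (x i * cnj (y i))) summable_on UNIV"
    using cs_summable(1)[OF assms] by (simp add: norm_mult)
  then show ?thesis by (rule abs_summable_summable)
qed

lemma inner_bound:
  assumes "l2 x" "l2 y" shows "cmod (l2_inner x y) \<le> sqrt (nsq x) * sqrt (nsq y)"
proof -
  have "(\<lambda>i. norm (x i * cnj (y i))) summable_on UNIV"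
    using cs_summable(1)[OF assms] by (simp add: norm_mult)
  then have "cmod (l2_inner x y) \<le> infsum (\<lambda>i. cmod (x i * cnj (y i))) UNIV"
    unfolding l2_inner_def by (rule norm_infsum_bound)
  also have "\<dots> \<le> sqrt (nsq x) * sqrt (nsq y)"
    using cs_summable(2)[OF assms] by (simp add: norm_mult)
  finally show ?thesis .
qed

lemma inner_bound2:
  assumes "l2 x" "l2 y" shows "(cmod (l2_inner x y))^2 \<le> nsq x * nsq y"
proof -
  have "(cmod (l2_inner x y))^2 \<le> (sqrt (nsq x) * sqrt (nsq y))^2"
    by (rule power_mono[OF inner_bound[OF assms]]) auto
  then show ?thesis by (simp add: power_mult_distrib nsq_nonneg)
qed

lemma inner_add_left:
  "l2 x \<Longrightarrow> l2 y \<Longrightarrow> l2 z \<Longrightarrow> l2_inner (\<lambda>i. x i + y i) z = l2_inner x z + l2_inner y z"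
  unfolding l2_inner_def by (simp add: distrib_right infsum_add inner_summable)

lemma inner_scale_left:
  "l2_inner (\<lambda>i. c * x i) z = c * l2_inner x z"
  unfolding l2_inner_def by (simp add: mult.assoc infsum_cmult_right')

lemma inner_scale_right:
  "l2_inner x (\<lambda>i. c * z i) = cnj c * l2_inner x z"
  unfolding l2_inner_def
  by (simp add: infsum_cmult_right' algebra_simps)

lemma inner_sum_left:
  "finite F \<Longrightarrow> (\<And>s. s \<in> F \<Longrightarrow> l2 (f s)) \<Longrightarrow> l2 z \<Longrightarrow>
   l2_inner (\<lambda>i. \<Sum>s\<in>F. f s i) z = (\<Sum>s\<in>F. l2_inner (f s) z)"
proof (induction F rule: finite_induct)
  case empty then show ?case by (simp add: l2_inner_def)
next
  case (insert a F)
  have "l2_inner (\<lambda>i. \<Sum>s\<in>insert a F. f s i) z = l2_inner (\<lambda>i. f a i + (\<Sum>s\<in>F. f s i)) z"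
    using insert by simp
  also have "\<dots> = l2_inner (f a) z + l2_inner (\<lambda>i. \<Sum>s\<in>F. f s i) z"
    using insert by (intro inner_add_left l2_sum) auto
  finally show ?case using insert by simp
qed

lemma inner_cnj_sym: "l2_inner y x = cnj (l2_inner x y)"
  unfolding l2_inner_def infsum_cnj[symmetric] by (simp add: mult.commute)

lemma infsum_of_real_c:
  "infsum (\<lambda>x. complex_of_real (f x)) A = complex_of_real (infsum f A)"
proof (cases "f summable_on A")
  case True
  then show ?thesis by (intro infsumI has_sum_of_real) (simp add: summable_iff_has_sum_infsum)
next
  case False
  have "\<not> (\<lambda>x. complex_of_real (f x)) summable_on A"
  proof
    assume "(\<lambda>x. complex_of_real (f x)) summable_on A"
    from summable_on_Re[OF this] False show False by simp
  qed
  with False show ?thesis by (simp add: infsum_not_exists)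
qed

lemma inner_self: "l2_inner x x = complex_of_real (nsq x)"
proof -
  have "l2_inner x x = infsum (\<lambda>i. complex_of_real ((cmod (x i))^2)) UNIV"
    unfolding l2_inner_def by (simp only: complex_norm_square)
  also have "\<dots> = complex_of_real (nsq x)"
    unfolding nsq_def by (rule infsum_of_real_c)
  finally show ?thesis .
qed

lemma inner_ket_left: "l2_inner (ket k) x = cnj (x k)"
proof -
  have "l2_inner (ket k) x = infsum (\<lambda>i. ket k i * cnj (x i)) {k}"
    unfolding l2_inner_def by (rule infsum_cong_neutral) (auto simp: ket_def)
  then show ?thesis by (simp add: ket_def)
qed

lemma inner_ket_right: "l2_inner x (ket k) = x k"
  using inner_ket_left[of k x] inner_cnj_sym[of x "ket k"] by simp

lemma nonneg_prod_summable:
  fixes f :: "'a \<Rightarrow> real" and g :: "'b \<Rightarrow> real"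
  assumes "f summable_on UNIV" "g summable_on UNIV" "\<And>x. f x \<ge> 0" "\<And>y. g y \<ge> 0"
  shows "(\<lambda>(x,y). f x * g y) summable_on UNIV"
    and "infsum (\<lambda>(x,y). f x * g y) UNIV = infsum f UNIV * infsum g UNIV"
proof -
  have hs: "((\<lambda>y. f x * g y) has_sum (f x * infsum g UNIV)) UNIV" for x
    using assms(2) by (intro has_sum_cmult_right) (simp add: summable_iff_has_sum_infsum)
  have s2: "(\<lambda>x. f x * infsum g UNIV) summable_on UNIV"
    using assms(1) by (rule summable_on_cmult_left)
  have "(\<lambda>(x,y). f x * g y) summable_on Sigma UNIV (\<lambda>_. UNIV)"
    by (rule summable_on_SigmaI[where g="\<lambda>x. f x * infsum g UNIV"])
       (use hs s2 assms(3,4) in auto)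
  then show S: "(\<lambda>(x,y). f x * g y) summable_on UNIV" by simp
  have "infsum (\<lambda>(x,y). f x * g y) UNIV = infsum (\<lambda>x. infsum (\<lambda>y. f x * g y) UNIV) UNIV"
    using infsum_Sigma'_banach[of "\<lambda>x y. f x * g y" UNIV "\<lambda>_. UNIV"] S by simp
  also have "\<dots> = infsum (\<lambda>x. f x * infsum g UNIV) UNIV"
    by (simp add: infsum_cmult_right')
  also have "\<dots> = infsum f UNIV * infsum g UNIV"
    by (simp add: infsum_cmult_left')
  finally show "infsum (\<lambda>(x,y). f x * g y) UNIV = infsum f UNIV * infsum g UNIV" .
qed

lemma abs_summable_of_norm:
  fixes f :: "'a \<Rightarrow> complex"
  shows "(\<lambda>x. norm (f x)) summable_on A \<Longrightarrow> f summable_on A"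
  by (rule abs_summable_summable) simp

lemma gen_fubini:
  fixes \<phi> :: "'m \<Rightarrow> 'p \<Rightarrow> complex" and \<beta> :: "'m \<Rightarrow> complex" and u :: "'p \<Rightarrow> complex"
  assumes phi: "\<And>m. l2 (\<phi> m)" and u: "l2 u"
    and bs: "(\<lambda>m. cmod (\<beta> m) * sqrt (nsq (\<phi> m))) summable_on UNIV"
  shows "(\<lambda>m. norm (\<beta> m * \<phi> m p)) summable_on UNIV"
    and "(\<lambda>p. u p * cnj (infsum (\<lambda>m. \<beta> m * \<phi> m p) UNIV)) summable_on UNIV"
    and "infsum (\<lambda>p. u p * cnj (infsum (\<lambda>m. \<beta> m * \<phi> m p) UNIV)) UNIV
         = infsum (\<lambda>m. cnj (\<beta> m) * l2_inner u (\<phi> m)) UNIV"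
proof -
  show "(\<lambda>m. norm (\<beta> m * \<phi> m p)) summable_on UNIV"
  proof (rule summable_on_comparison_test[OF bs])
    fix m
    show "norm (\<beta> m * \<phi> m p) \<le> cmod (\<beta> m) * sqrt (nsq (\<phi> m))"
      unfolding norm_mult by (intro mult_left_mono l2_coord_le'[OF phi]) auto
  qed auto
  define g where "g = (\<lambda>(m, p). u p * cnj (\<beta> m) * cnj (\<phi> m p))"
  have inner: "(\<lambda>p. norm (g (m, p))) summable_on UNIV" for m
  proof -
    have "(\<lambda>p. cmod (\<beta> m) * (cmod (u p) * cmod (\<phi> m p))) summable_on UNIV"
      by (intro summable_on_cmult_right cs_summable(1) u phi)
    then show ?thesis unfolding g_def by (simp add: norm_mult mult_ac)
  qed
  have innerb: "infsum (\<lambda>p. norm (g (m, p))) UNIV \<le> sqrt (nsq u) * (cmod (\<beta> m) * sqrt (nsq (\<phi> m)))" for m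
  proof -
    have "infsum (\<lambda>p. norm (g (m, p))) UNIV = cmod (\<beta> m) * infsum (\<lambda>p. cmod (u p) * cmod (\<phi> m p)) UNIV"
      unfolding g_def by (simp add: norm_mult mult_ac infsum_cmult_right'[symmetric])
    also have "\<dots> \<le> cmod (\<beta> m) * (sqrt (nsq u) * sqrt (nsq (\<phi> m)))"
      by (intro mult_left_mono cs_summable(2) u phi) auto
    finally show ?thesis by (simp add: mult_ac)
  qed
  have outer: "(\<lambda>m. infsum (\<lambda>p. norm (g (m, p))) UNIV) summable_on UNIV"
    by (rule summable_on_comparison_test[OF summable_on_cmult_right[OF bs, of "sqrt (nsq u)"]])
       (use innerb in \<open>auto intro: infsum_nonneg\<close>)
  have "(\<lambda>x. norm (g x)) summable_on Sigma UNIV (\<lambda>_. UNIV)"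
  proof (rule Infinite_Sum.abs_summable_on_Sigma_iff[THEN iffD2], intro conjI ballI)
    show "(\<lambda>x. norm (infsum (\<lambda>y. norm (g (x, y))) UNIV)) summable_on UNIV"
      using outer by (simp add: infsum_nonneg)
  qed (use inner in auto)
  then have gs: "g summable_on UNIV" by (simp add: abs_summable_summable)
  then have gs': "(\<lambda>(m, p). g (m, p)) summable_on UNIV \<times> UNIV" by simp
  have "infsum (\<lambda>m. infsum (\<lambda>p. g (m, p)) UNIV) UNIV = infsum (\<lambda>p. infsum (\<lambda>m. g (m, p)) UNIV) UNIV"
    by (rule infsum_swap_banach[OF gs'])
  moreover have "infsum (\<lambda>p. g (m, p)) UNIV = cnj (\<beta> m) * l2_inner u (\<phi> m)" for m
    unfolding g_def l2_inner_def by (simp add: infsum_cmult_right'[symmetric] mult_ac)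
  moreover have "infsum (\<lambda>m. g (m, p)) UNIV = u p * cnj (infsum (\<lambda>m. \<beta> m * \<phi> m p) UNIV)" for p
  proof -
    have "cnj (infsum (\<lambda>m. \<beta> m * \<phi> m p) UNIV) = infsum (\<lambda>m. cnj (\<beta> m) * cnj (\<phi> m p)) UNIV"
      by (subst infsum_cnj[symmetric]) simp
    then show ?thesis unfolding g_def by (simp add: infsum_cmult_right'[symmetric] mult_ac)
  qed
  ultimately show "infsum (\<lambda>p. u p * cnj (infsum (\<lambda>m. \<beta> m * \<phi> m p) UNIV)) UNIV
         = infsum (\<lambda>m. cnj (\<beta> m) * l2_inner u (\<phi> m)) UNIV" by simp
  have "(\<lambda>(p, m). g (m, p)) summable_on UNIV \<times> UNIV"
    using summable_on_swap[of g UNIV UNIV] gs by simp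
  then have "(\<lambda>p. infsum (\<lambda>m. g (m, p)) UNIV) summable_on UNIV"
    using summable_on_Sigma_banach[of "\<lambda>p m. g (m, p)" UNIV "\<lambda>_. UNIV"] by simp
  then show "(\<lambda>p. u p * cnj (infsum (\<lambda>m. \<beta> m * \<phi> m p) UNIV)) summable_on UNIV"
    using \<open>\<And>p. infsum (\<lambda>m. g (m, p)) UNIV = u p * cnj (infsum (\<lambda>m. \<beta> m * \<phi> m p) UNIV)\<close> by simp
qed

definition hsf :: "('k \<Rightarrow> 'i \<Rightarrow> complex) \<Rightarrow> bool" where
  "hsf c \<longleftrightarrow> (\<forall>k. l2 (c k)) \<and> (\<lambda>k. nsq (c k)) summable_on UNIV"

definition synth :: "('k \<Rightarrow> 'i \<Rightarrow> complex) \<Rightarrow> ('k \<Rightarrow> complex) \<Rightarrow> 'i \<Rightarrow> complex" where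
  "synth c x = (\<lambda>i. infsum (\<lambda>k. x k * c k i) UNIV)"

definition adjc :: "('k \<Rightarrow> 'i \<Rightarrow> complex) \<Rightarrow> ('i \<Rightarrow> complex) \<Rightarrow> 'k \<Rightarrow> complex" where
  "adjc c y = (\<lambda>k. l2_inner y (c k))"

definition gram :: "('k \<Rightarrow> 'i \<Rightarrow> complex) \<Rightarrow> ('i \<Rightarrow> complex) \<Rightarrow> 'i \<Rightarrow> complex" where
  "gram c y = synth c (adjc c y)"

definition hsS :: "('k \<Rightarrow> 'i \<Rightarrow> complex) \<Rightarrow> real" where
  "hsS c = infsum (\<lambda>k. nsq (c k)) UNIV"

lemma hsf_l2: "hsf c \<Longrightarrow> l2 (c k)" unfolding hsf_def by auto

lemma hsS_nonneg: "0 \<le> hsS c" unfolding hsS_def by (rule infsum_nonneg) (auto simp: nsq_nonneg)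

lemma hsf_sqrt_l2:
  assumes "hsf c" shows "l2 (\<lambda>k. complex_of_real (sqrt (nsq (c k))))"
  using assms unfolding hsf_def l2_def by (simp add: nsq_nonneg)

lemma hsf_col_l2:
  assumes "hsf c" shows "l2 (\<lambda>k. c k i)"
  unfolding l2_def
  by (rule summable_on_comparison_test[where f="\<lambda>k. nsq (c k)"])
     (use assms in \<open>auto simp: hsf_def intro: l2_coord_le\<close>)

lemma hsf_cs:
  assumes "hsf c" "l2 x" shows "(\<lambda>k. cmod (x k) * sqrt (nsq (c k))) summable_on UNIV"
  using cs_summable(1)[OF assms(2) hsf_sqrt_l2[OF assms(1)]] by (simp add: nsq_nonneg)

lemma hsf_cols:
  assumes "hsf c"
  shows "(\<lambda>i. infsum (\<lambda>k. (cmod (c k i))^2) UNIV) summable_on UNIV"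
    and "infsum (\<lambda>i. infsum (\<lambda>k. (cmod (c k i))^2) UNIV) UNIV = hsS c"
proof -
  have "(\<lambda>(k, i). (cmod (c k i))^2) summable_on Sigma UNIV (\<lambda>_. UNIV)"
    by (rule summable_on_SigmaI[where g="\<lambda>k. nsq (c k)"])
       (use assms in \<open>auto simp: hsf_def intro: l2_has_sum\<close>)
  then have s: "(\<lambda>(k, i). (cmod (c k i))^2) summable_on UNIV \<times> UNIV" by simp
  have "(\<lambda>(i, k). (cmod (c k i))^2) summable_on UNIV \<times> UNIV"
    using summable_on_swap[of "\<lambda>(k, i). (cmod (c k i))^2" UNIV UNIV] s by simp
  then show "(\<lambda>i. infsum (\<lambda>k. (cmod (c k i))^2) UNIV) summable_on UNIV"
    using summable_on_Sigma_banach[of "\<lambda>i k. (cmod (c k i))^2" UNIV "\<lambda>_. UNIV"] by simp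
  have "infsum (\<lambda>k. infsum (\<lambda>i. (cmod (c k i))^2) UNIV) UNIV = infsum (\<lambda>i. infsum (\<lambda>k. (cmod (c k i))^2) UNIV) UNIV"
    by (rule infsum_swap_banach) (use s in simp)
  then show "infsum (\<lambda>i. infsum (\<lambda>k. (cmod (c k i))^2) UNIV) UNIV = hsS c"
    unfolding hsS_def nsq_def by simp
qed

lemma synth_abs_summable:
  assumes "hsf c" "l2 x" shows "(\<lambda>k. norm (x k * c k i)) summable_on UNIV"
  using cs_summable(1)[OF assms(2) hsf_col_l2[OF assms(1)]] by (simp add: norm_mult)

lemma synth_summable:
  assumes "hsf c" "l2 x" shows "(\<lambda>k. x k * c k i) summable_on UNIV"
  by (rule abs_summable_of_norm[OF synth_abs_summable[OF assms]])

lemma synth_coord_bound: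
  assumes "hsf c" "l2 x"
  shows "(cmod (synth c x i))^2 \<le> nsq x * infsum (\<lambda>k. (cmod (c k i))^2) UNIV"
proof -
  have "cmod (synth c x i) \<le> infsum (\<lambda>k. norm (x k * c k i)) UNIV"
    unfolding synth_def by (rule norm_infsum_bound) (rule synth_abs_summable[OF assms])
  also have "\<dots> \<le> sqrt (nsq x) * sqrt (nsq (\<lambda>k. c k i))"
    using cs_summable(2)[OF assms(2) hsf_col_l2[OF assms(1)]] by (simp add: norm_mult)
  finally have "(cmod (synth c x i))^2 \<le> (sqrt (nsq x) * sqrt (nsq (\<lambda>k. c k i)))^2"
    by (intro power_mono) auto
  also have "\<dots> = nsq x * nsq (\<lambda>k. c k i)" by (simp add: power_mult_distrib nsq_nonneg)
  finally show ?thesis by (simp add: nsq_def[of "\<lambda>k. c k i"])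
qed

lemma synth_l2:
  assumes "hsf c" "l2 x" shows "l2 (synth c x)" and "nsq (synth c x) \<le> nsq x * hsS c"
proof -
  have s: "(\<lambda>i. nsq x * infsum (\<lambda>k. (cmod (c k i))^2) UNIV) summable_on UNIV"
    by (intro summable_on_cmult_right hsf_cols(1)[OF assms(1)])
  show l: "l2 (synth c x)" unfolding l2_def
    by (rule summable_on_comparison_test[OF s]) (use synth_coord_bound[OF assms] in auto)
  have "nsq (synth c x) \<le> infsum (\<lambda>i. nsq x * infsum (\<lambda>k. (cmod (c k i))^2) UNIV) UNIV"
    unfolding nsq_def[of "synth c x"]
    by (rule infsum_mono[OF l[unfolded l2_def] s]) (use synth_coord_bound[OF assms] in auto)
  also have "\<dots> = nsq x * hsS c"
    by (simp add: infsum_cmult_right' hsf_cols(2)[OF assms(1)])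
  finally show "nsq (synth c x) \<le> nsq x * hsS c" .
qed

lemma synth_add:
  assumes "hsf c" "l2 x" "l2 y"
  shows "synth c (\<lambda>k. x k + y k) = (\<lambda>i. synth c x i + synth c y i)"
  unfolding synth_def
  by (auto simp: distrib_right intro!: infsum_add synth_summable assms)

lemma synth_scale:
  shows "synth c (\<lambda>k. a * x k) = (\<lambda>i. a * synth c x i)"
  unfolding synth_def by (simp add: mult.assoc infsum_cmult_right')

lemma synth_ket: "synth c (ket k) = c k"
proof
  fix i
  have "synth c (ket k) i = infsum (\<lambda>k'. ket k k' * c k' i) {k}"
    unfolding synth_def by (rule infsum_cong_neutral) (auto simp: ket_def)
  then show "synth c (ket k) i = c k i" by (simp add: ket_def)
qed

lemma bounded_op_synth:
  assumes "hsf c" shows "bounded_op (synth c)"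
  unfolding bounded_op_def
proof (intro conjI allI impI)
  fix x :: "'a \<Rightarrow> complex" assume "l2 x"
  then show "l2 (synth c x)" using synth_l2[OF assms] by auto
next
  fix x y :: "'a \<Rightarrow> complex" assume "l2 x" "l2 y"
  then show "synth c (\<lambda>i. x i + y i) = (\<lambda>p. synth c x p + synth c y p)"
    by (rule synth_add[OF assms])
next
  fix a and x :: "'a \<Rightarrow> complex"
  show "synth c (\<lambda>i. a * x i) = (\<lambda>p. a * synth c x p)" by (rule synth_scale)
next
  show "\<exists>C. \<forall>x. l2 x \<longrightarrow> l2_norm (synth c x) \<le> C * l2_norm x"
  proof (intro exI allI impI)
    fix x :: "'a \<Rightarrow> complex" assume "l2 x"
    have "sqrt (nsq (synth c x)) \<le> sqrt (nsq x * hsS c)"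
      using synth_l2(2)[OF assms \<open>l2 x\<close>] by simp
    then show "l2_norm (synth c x) \<le> sqrt (hsS c) * l2_norm x"
      by (simp add: l2_norm_nsq real_sqrt_mult mult.commute)
  qed
qed

lemma hs_synth: "hsf c \<Longrightarrow> hs_op (synth c)"
  unfolding hs_op_def using bounded_op_synth
  by (auto simp: synth_ket hsf_def l2_norm_nsq nsq_nonneg)

lemma adjc_l2:
  assumes "hsf c" "l2 y" shows "l2 (adjc c y)"
  unfolding l2_def adjc_def
  by (rule summable_on_comparison_test[OF summable_on_cmult_right[of "\<lambda>k. nsq (c k)" UNIV "nsq y"]])
     (use assms in \<open>auto simp: hsf_def intro: inner_bound2\<close>)

lemma adjoint_identity:
  assumes "hsf c" "l2 y" "l2 u"
  shows "l2_inner (adjc c y) u = l2_inner y (synth c u)"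
proof -
  have "infsum (\<lambda>i. y i * cnj (infsum (\<lambda>k. u k * c k i) UNIV)) UNIV
         = infsum (\<lambda>k. cnj (u k) * l2_inner y (c k)) UNIV"
    by (rule gen_fubini(3)) (use assms hsf_cs[OF assms(1,3)] in \<open>auto simp: hsf_def\<close>)
  then show ?thesis unfolding l2_inner_def synth_def adjc_def by (simp add: mult.commute)
qed

lemma adjc_sum:
  assumes "finite F" "\<And>s. s \<in> F \<Longrightarrow> l2 (y s)" "hsf c"
  shows "adjc c (\<lambda>i. \<Sum>s\<in>F. \<alpha> s * y s i) = (\<lambda>k. \<Sum>s\<in>F. \<alpha> s * adjc c (y s) k)"
  unfolding adjc_def
  by (subst inner_sum_left) (use assms in \<open>auto simp: inner_scale_left hsf_def intro: l2_scale\<close>)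

lemma synth_sum:
  assumes "finite F" "\<And>s. s \<in> F \<Longrightarrow> l2 (x s)" "hsf c"
  shows "synth c (\<lambda>k. \<Sum>s\<in>F. \<alpha> s * x s k) = (\<lambda>i. \<Sum>s\<in>F. \<alpha> s * synth c (x s) i)"
  using assms(1,2)
proof (induction F rule: finite_induct)
  case empty
  then show ?case unfolding synth_def by simp
next
  case (insert a F)
  have "synth c (\<lambda>k. \<Sum>s\<in>insert a F. \<alpha> s * x s k) = synth c (\<lambda>k. \<alpha> a * x a k + (\<Sum>s\<in>F. \<alpha> s * x s k))"
    using insert by simp
  also have "\<dots> = (\<lambda>i. synth c (\<lambda>k. \<alpha> a * x a k) i + synth c (\<lambda>k. \<Sum>s\<in>F. \<alpha> s * x s k) i)"
    using insert by (intro synth_add[OF assms(3)] l2_scale l2_sum) auto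
  finally show ?case using insert by (simp add: synth_scale)
qed

lemma gram_sum:
  assumes "finite F" "\<And>s. s \<in> F \<Longrightarrow> l2 (y s)" "hsf c"
  shows "gram c (\<lambda>i. \<Sum>s\<in>F. \<alpha> s * y s i) = (\<lambda>i. \<Sum>s\<in>F. \<alpha> s * gram c (y s) i)"
  unfolding gram_def
  by (subst adjc_sum) (use assms in \<open>auto intro!: synth_sum adjc_l2\<close>)

lemma bop_add: "bounded_op T \<Longrightarrow> l2 x \<Longrightarrow> l2 y \<Longrightarrow> T (\<lambda>i. x i + y i) = (\<lambda>p. T x p + T y p)"
  unfolding bounded_op_def by blast

lemma bop_scale: "bounded_op T \<Longrightarrow> l2 x \<Longrightarrow> T (\<lambda>i. c * x i) = (\<lambda>p. c * T x p)"
  unfolding bounded_op_def by blast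

lemma bop_zero: assumes "bounded_op T" shows "T (\<lambda>_. 0) = (\<lambda>_. 0)"
  using bop_scale[OF assms l2_zero, of 0] by simp

lemma bop_l2: "bounded_op T \<Longrightarrow> l2 x \<Longrightarrow> l2 (T x)"
  unfolding bounded_op_def by blast

lemma bop_sum:
  assumes "bounded_op T" "finite F" "\<And>s. s \<in> F \<Longrightarrow> l2 (f s)"
  shows "T (\<lambda>i. \<Sum>s\<in>F. \<alpha> s * f s i) = (\<lambda>p. \<Sum>s\<in>F. \<alpha> s * T (f s) p)"
  using assms(2,3)
proof (induction F rule: finite_induct)
  case empty
  then show ?case using bop_zero[OF assms(1)] by simp
next
  case (insert a F)
  have "T (\<lambda>i. \<Sum>s\<in>insert a F. \<alpha> s * f s i) = T (\<lambda>i. \<alpha> a * f a i + (\<Sum>s\<in>F. \<alpha> s * f s i))"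
    using insert by simp
  also have "\<dots> = (\<lambda>p. T (\<lambda>i. \<alpha> a * f a i) p + T (\<lambda>i. \<Sum>s\<in>F. \<alpha> s * f s i) p)"
    using insert by (intro bop_add[OF assms(1)] l2_scale l2_sum) auto
  finally show ?case using insert by (simp add: bop_scale[OF assms(1)])
qed

lemma bop_bound:
  assumes "bounded_op T"
  obtains C where "C \<ge> 0" "\<And>x. l2 x \<Longrightarrow> sqrt (nsq (T x)) \<le> C * sqrt (nsq x)"
proof -
  obtain C where C: "\<And>x. l2 x \<Longrightarrow> l2_norm (T x) \<le> C * l2_norm x"
    using assms unfolding bounded_op_def by blast
  show ?thesis
  proof (rule that[of "\<bar>C\<bar>"])
    fix x :: "'a \<Rightarrow> complex" assume "l2 x"
    have "sqrt (nsq (T x)) \<le> C * sqrt (nsq x)" using C[OF \<open>l2 x\<close>] by (simp add: l2_norm_nsq)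
    also have "\<dots> \<le> \<bar>C\<bar> * sqrt (nsq x)" by (intro mult_right_mono) (auto simp: nsq_nonneg)
    finally show "sqrt (nsq (T x)) \<le> \<bar>C\<bar> * sqrt (nsq x)" .
  qed auto
qed

lemma expansion_has_sum:
  assumes T: "bounded_op T" and x: "l2 x"
  shows "((\<lambda>k. x k * T (ket k) p) has_sum T x p) UNIV"
proof -
  obtain C where C0: "C \<ge> 0" and C: "\<And>z. l2 z \<Longrightarrow> sqrt (nsq (T z)) \<le> C * sqrt (nsq z)"
    using bop_bound[OF T] by blast
  define xF where "xF F = (\<lambda>k. if k \<in> F then x k else 0)" for F
  define rF where "rF F = (\<lambda>k. if k \<in> F then 0 else x k)" for F
  have l2xF: "l2 (xF F)" if "finite F" for F
    by (rule l2_finite_support[OF that]) (auto simp: xF_def)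
  have l2rF: "l2 (rF F)" for F
    by (rule l2_comparison[OF x, where c=1]) (auto simp: rF_def)
  have xF_sum: "xF F = (\<lambda>k. \<Sum>s\<in>F. x s * ket s k)" if "finite F" for F
    using that by (auto simp: xF_def ket_def if_distrib[of "\<lambda>t. _ * t"] cong: if_cong)
  have TxF: "T (xF F) p = (\<Sum>s\<in>F. x s * T (ket s) p)" if "finite F" for F
    unfolding xF_sum[OF that] by (subst bop_sum[OF T that]) auto
  have split: "T x p = T (xF F) p + T (rF F) p" if "finite F" for F
  proof -
    have "x = (\<lambda>k. xF F k + rF F k)" by (auto simp: xF_def rF_def)
    then have "T x = T (\<lambda>k. xF F k + rF F k)" by simp
    also have "\<dots> = (\<lambda>p. T (xF F) p + T (rF F) p)" by (rule bop_add[OF T l2xF[OF that] l2rF])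
    finally show ?thesis by simp
  qed
  have nsq_rF: "nsq (rF F) = nsq x - (\<Sum>k\<in>F. (cmod (x k))^2)" if "finite F" for F
  proof -
    have h1: "((\<lambda>k. (cmod (rF F k))^2) has_sum nsq (rF F)) UNIV" by (rule l2_has_sum[OF l2rF])
    have h2: "((\<lambda>k. (cmod (xF F k))^2) has_sum (\<Sum>k\<in>F. (cmod (x k))^2)) UNIV"
    proof -
      have "((\<lambda>k. (cmod (xF F k))^2) has_sum (\<Sum>k\<in>F. (cmod (xF F k))^2)) F"
        using that by (rule has_sum_finite)
      then have "((\<lambda>k. (cmod (xF F k))^2) has_sum (\<Sum>k\<in>F. (cmod (x k))^2)) F"
        by (simp add: xF_def)
      then show ?thesis
        by (rule has_sum_cong_neutral[THEN iffD1, rotated -1]) (auto simp: xF_def)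
    qed
    have "((\<lambda>k. (cmod (rF F k))^2 + (cmod (xF F k))^2) has_sum (nsq (rF F) + (\<Sum>k\<in>F. (cmod (x k))^2))) UNIV"
      by (rule has_sum_add[OF h1 h2])
    moreover have "(\<lambda>k. (cmod (rF F k))^2 + (cmod (xF F k))^2) = (\<lambda>k. (cmod (x k))^2)"
      by (auto simp: xF_def rF_def)
    ultimately have "((\<lambda>k. (cmod (x k))^2) has_sum (nsq (rF F) + (\<Sum>k\<in>F. (cmod (x k))^2))) UNIV"
      by simp
    with l2_has_sum[OF x] have "nsq x = nsq (rF F) + (\<Sum>k\<in>F. (cmod (x k))^2)"
      using has_sum_unique by blast
    then show ?thesis by simp
  qed
  have ev: "\<forall>\<^sub>F F in finite_subsets_at_top UNIV.
      norm ((\<Sum>k\<in>F. x k * T (ket k) p) - T x p) \<le> C * sqrt (nsq x - (\<Sum>k\<in>F. (cmod (x k))^2))"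
  proof (rule eventually_finite_subsets_at_top_weakI)
    fix F :: "'a set" assume F: "finite F"
    have "norm ((\<Sum>k\<in>F. x k * T (ket k) p) - T x p) = cmod (T (rF F) p)"
      using split[OF F] TxF[OF F] by (simp add: norm_minus_commute)
    also have "\<dots> \<le> sqrt (nsq (T (rF F)))"
      by (rule l2_coord_le'[OF bop_l2[OF T l2rF]])
    also have "\<dots> \<le> C * sqrt (nsq (rF F))" by (rule C[OF l2rF])
    finally show "norm ((\<Sum>k\<in>F. x k * T (ket k) p) - T x p) \<le> C * sqrt (nsq x - (\<Sum>k\<in>F. (cmod (x k))^2))"
      using nsq_rF[OF F] by simp
  qed
  have lim: "((\<lambda>F. \<Sum>k\<in>F. (cmod (x k))^2) \<longlongrightarrow> nsq x) (finite_subsets_at_top UNIV)"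
    using l2_has_sum[OF x] unfolding has_sum_def .
  have "((\<lambda>F. C * sqrt (nsq x - (\<Sum>k\<in>F. (cmod (x k))^2))) \<longlongrightarrow> C * sqrt (nsq x - nsq x)) (finite_subsets_at_top UNIV)"
    by (intro tendsto_intros lim)
  then have lim0: "((\<lambda>F. C * sqrt (nsq x - (\<Sum>k\<in>F. (cmod (x k))^2))) \<longlongrightarrow> 0) (finite_subsets_at_top UNIV)"
    by simp
  have "((\<lambda>F. (\<Sum>k\<in>F. x k * T (ket k) p) - T x p) \<longlongrightarrow> 0) (finite_subsets_at_top UNIV)"
    by (rule Lim_null_comparison[OF ev lim0])
  then show ?thesis unfolding has_sum_def by (rule LIM_zero_cancel)
qed

lemma expansion:
  assumes "bounded_op T" "l2 x" shows "T x = synth (\<lambda>k. T (ket k)) x"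
  unfolding synth_def using expansion_has_sum[OF assms] by (auto intro: infsumI[symmetric])

lemma bop_conj:
  assumes "bounded_op_conj T" shows "bounded_op (\<lambda>x. T (\<lambda>k. cnj (x k)))"
  unfolding bounded_op_def
proof (intro conjI allI impI)
  fix x :: "'a \<Rightarrow> complex" assume "l2 x"
  then show "l2 (T (\<lambda>k. cnj (x k)))" using assms l2_cnj unfolding bounded_op_conj_def by blast
next
  fix x y :: "'a \<Rightarrow> complex" assume "l2 x" "l2 y"
  have "T (\<lambda>i. cnj (x i) + cnj (y i)) = (\<lambda>p. T (\<lambda>k. cnj (x k)) p + T (\<lambda>k. cnj (y k)) p)"
    using assms l2_cnj[OF \<open>l2 x\<close>] l2_cnj[OF \<open>l2 y\<close>] unfolding bounded_op_conj_def by blast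
  then show "T (\<lambda>k. cnj (x k + y k)) = (\<lambda>p. T (\<lambda>k. cnj (x k)) p + T (\<lambda>k. cnj (y k)) p)"
    by simp
next
  fix c and x :: "'a \<Rightarrow> complex" assume "l2 x"
  have "T (\<lambda>i. cnj c * cnj (x i)) = (\<lambda>p. c * T (\<lambda>k. cnj (x k)) p)"
    using assms l2_cnj[OF \<open>l2 x\<close>] unfolding bounded_op_conj_def by blast
  then show "T (\<lambda>k. cnj (c * x k)) = (\<lambda>p. c * T (\<lambda>k. cnj (x k)) p)"
    by simp
next
  obtain C where C: "\<And>x. l2 x \<Longrightarrow> l2_norm (T x) \<le> C * l2_norm x"
    using assms unfolding bounded_op_conj_def by blast
  show "\<exists>C. \<forall>x. l2 x \<longrightarrow> l2_norm (T (\<lambda>k. cnj (x k))) \<le> C * l2_norm x"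
  proof (intro exI allI impI)
    fix x :: "'a \<Rightarrow> complex" assume "l2 x"
    show "l2_norm (T (\<lambda>k. cnj (x k))) \<le> C * l2_norm x"
      using C[OF l2_cnj[OF \<open>l2 x\<close>]] by (simp add: l2_norm_nsq)
  qed
qed

lemma cnj_ket[simp]: "(\<lambda>k. cnj (ket s k)) = ket s"
  by (auto simp: ket_def)

lemma expansion_conj:
  assumes "bounded_op_conj T" "l2 x" shows "T x = synth (\<lambda>k. T (ket k)) (\<lambda>k. cnj (x k))"
proof -
  have "T x = (\<lambda>x. T (\<lambda>k. cnj (x k))) (\<lambda>k. cnj (x k))" by simp
  also have "\<dots> = synth (\<lambda>k. (\<lambda>x. T (\<lambda>k. cnj (x k))) (ket k)) (\<lambda>k. cnj (x k))"
    by (rule expansion[OF bop_conj[OF assms(1)] l2_cnj[OF assms(2)]])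
  finally show ?thesis by simp
qed

lemma hs_hsf: "hs_op A \<Longrightarrow> hsf (\<lambda>k. A (ket k))"
  unfolding hs_op_def hsf_def bounded_op_def l2_norm_nsq by (auto simp: nsq_nonneg)

lemma hs_conj_hsf: "hs_op_conj B \<Longrightarrow> hsf (\<lambda>k. B (ket k))"
  unfolding hs_op_conj_def hsf_def bounded_op_conj_def l2_norm_nsq by (auto simp: nsq_nonneg)

lemma AAs_gram:
  assumes "hs_op A" "l2 y" shows "AAs A y = gram (\<lambda>k. A (ket k)) y"
proof -
  have "adj A y = adjc (\<lambda>k. A (ket k)) y" unfolding adj_def adjc_def ..
  moreover have "l2 (adjc (\<lambda>k. A (ket k)) y)" by (rule adjc_l2[OF hs_hsf[OF assms(1)] assms(2)])
  ultimately show ?thesis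
    unfolding AAs_def gram_def using expansion assms(1) unfolding hs_op_def by auto
qed

lemma BBs_gram:
  assumes "hs_op_conj B" "l2 y" shows "BBs B y = gram (\<lambda>k. B (ket k)) y"
proof -
  have e: "adj_conj B y = (\<lambda>k. cnj (adjc (\<lambda>k. B (ket k)) y k))"
    unfolding adj_conj_def adjc_def by (simp add: inner_cnj_sym[of y])
  have "l2 (adjc (\<lambda>k. B (ket k)) y)" by (rule adjc_l2[OF hs_conj_hsf[OF assms(1)] assms(2)])
  then have "l2 (adj_conj B y)" unfolding e by (rule l2_cnj)
  then have "B (adj_conj B y) = synth (\<lambda>k. B (ket k)) (\<lambda>k. cnj (adj_conj B y k))"
    using expansion_conj assms(1) unfolding hs_op_conj_def by blast
  then show ?thesis unfolding BBs_def gram_def comp_def e by simp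
qed

lemma vec_formula:
  assumes "hs_op A" "hs_op_conj B"
  shows "vec (B \<circ> transp A) (i, j) = infsum (\<lambda>k. A (ket k) i * B (ket k) j) UNIV"
proof -
  have e: "adj A (ket i) = (\<lambda>k. cnj (A (ket k) i))"
    unfolding adj_def by (simp add: inner_ket_left)
  have "l2 (adj A (ket i))" unfolding adj_def
    using adjc_l2[OF hs_hsf[OF assms(1)], of "ket i"] unfolding adjc_def by simp
  then have "B (adj A (ket i)) = synth (\<lambda>k. B (ket k)) (\<lambda>k. cnj (adj A (ket i) k))"
    using expansion_conj assms(2) unfolding hs_op_conj_def by blast
  then show ?thesis unfolding vec_def transp_def synth_def by (simp add: e)
qed

lemma gram_ket_coord:
  assumes "hsf c" shows "gram c (ket i') i = infsum (\<lambda>k. cnj (c k i') * c k i) UNIV"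
  unfolding gram_def synth_def adjc_def by (simp add: inner_ket_left)

lemma op_rank_cong:
  assumes "\<And>y. l2 y \<Longrightarrow> T y = S y" shows "op_rank T = op_rank S"
proof -
  have "{T x |x. l2 x} = {S x |x. l2 x}" using assms by force
  then show ?thesis unfolding op_rank_def by simp
qed

lemma rank_A: "hs_op A \<Longrightarrow> op_rank (AAs A) = op_rank (gram (\<lambda>k. A (ket k)))"
  by (rule op_rank_cong) (rule AAs_gram)

lemma rank_B: "hs_op_conj B \<Longrightarrow> op_rank (BBs B) = op_rank (gram (\<lambda>k. B (ket k)))"
  by (rule op_rank_cong) (rule BBs_gram)

lemma synth_zero_fam: "(\<And>k. c k = (\<lambda>_. 0)) \<Longrightarrow> synth c x = (\<lambda>_. 0)"
  unfolding synth_def by simp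

lemma nonzero_A: "hs_op A \<Longrightarrow> nonzero_op A \<Longrightarrow> \<exists>k. A (ket k) \<noteq> (\<lambda>_. 0)"
  unfolding nonzero_op_def using expansion synth_zero_fam unfolding hs_op_def by metis

lemma nonzero_B: "hs_op_conj B \<Longrightarrow> nonzero_op B \<Longrightarrow> \<exists>k. B (ket k) \<noteq> (\<lambda>_. 0)"
  unfolding nonzero_op_def using expansion_conj synth_zero_fam unfolding hs_op_conj_def by metis

definition phi :: "('k \<Rightarrow> 'i \<Rightarrow> complex) \<Rightarrow> ('k \<Rightarrow> 'j \<Rightarrow> complex) \<Rightarrow> 'k \<times> 'k \<Rightarrow> 'i \<times> 'j \<Rightarrow> complex" where
  "phi a b = (\<lambda>(k, l) (i, j). a k i * b l j)"

definition Mx :: "('k \<Rightarrow> 'i \<Rightarrow> complex) \<Rightarrow> ('k \<Rightarrow> 'j \<Rightarrow> complex) \<Rightarrow> ('i \<times> 'j \<Rightarrow> complex) \<Rightarrow> 'k \<times> 'k \<Rightarrow> complex" where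
  "Mx a b w = (\<lambda>kl. l2_inner w (phi a b kl))"

lemma complex_prod_infsum:
  fixes f :: "'a \<Rightarrow> complex" and g :: "'b \<Rightarrow> complex"
  assumes "(\<lambda>x. norm (f x)) summable_on UNIV" "(\<lambda>y. norm (g y)) summable_on UNIV"
  shows "(\<lambda>(x, y). f x * g y) summable_on UNIV"
    and "infsum f UNIV * infsum g UNIV = infsum (\<lambda>(x, y). f x * g y) UNIV"
proof -
  have "(\<lambda>(x, y). norm (f x) * norm (g y)) summable_on UNIV"
    by (rule nonneg_prod_summable(1)[OF assms]) auto
  then have "(\<lambda>p. norm ((\<lambda>(x, y). f x * g y) p)) summable_on UNIV"
    by (simp add: case_prod_beta' norm_mult)
  then show S: "(\<lambda>(x, y). f x * g y) summable_on UNIV" by (rule abs_summable_of_norm)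
  have "infsum f UNIV * infsum g UNIV = infsum (\<lambda>x. f x * infsum g UNIV) UNIV"
    by (simp add: infsum_cmult_left')
  also have "\<dots> = infsum (\<lambda>x. infsum (\<lambda>y. f x * g y) UNIV) UNIV"
    by (simp add: infsum_cmult_right')
  also have "\<dots> = infsum (\<lambda>(x, y). f x * g y) UNIV"
    using infsum_Sigma'_banach[of "\<lambda>x y. f x * g y" UNIV "\<lambda>_. UNIV"] S by simp
  finally show "infsum f UNIV * infsum g UNIV = infsum (\<lambda>(x, y). f x * g y) UNIV" .
qed

context
  fixes a :: "'k \<Rightarrow> 'i \<Rightarrow> complex" and b :: "'k \<Rightarrow> 'j \<Rightarrow> complex"
  assumes ha: "hsf a" and hb: "hsf b"
begin

lemma phi_l2: "l2 (phi a b kl)" and phi_nsq: "nsq (phi a b (k, l)) = nsq (a k) * nsq (b l)"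
proof -
  obtain k l where kl: "kl = (k, l)" by (cases kl)
  have s: "(\<lambda>(i, j). (cmod (a k i))^2 * (cmod (b l j))^2) summable_on UNIV"
       "infsum (\<lambda>(i, j). (cmod (a k i))^2 * (cmod (b l j))^2) UNIV = nsq (a k) * nsq (b l)"
    using nonneg_prod_summable[of "\<lambda>i. (cmod (a k i))^2" "\<lambda>j. (cmod (b l j))^2"]
      hsf_l2[OF ha, of k] hsf_l2[OF hb, of l] by (auto simp: l2_def nsq_def)
  have e: "(\<lambda>p. (cmod (phi a b (k, l) p))^2) = (\<lambda>(i, j). (cmod (a k i))^2 * (cmod (b l j))^2)"
    by (auto simp: phi_def norm_mult power_mult_distrib)
  show "l2 (phi a b kl)" unfolding kl l2_def e using s(1) .
  fix k l
  have s: "infsum (\<lambda>(i, j). (cmod (a k i))^2 * (cmod (b l j))^2) UNIV = nsq (a k) * nsq (b l)"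
    using nonneg_prod_summable[of "\<lambda>i. (cmod (a k i))^2" "\<lambda>j. (cmod (b l j))^2"]
      hsf_l2[OF ha, of k] hsf_l2[OF hb, of l] by (auto simp: l2_def nsq_def)
  have e: "(\<lambda>p. (cmod (phi a b (k, l) p))^2) = (\<lambda>(i, j). (cmod (a k i))^2 * (cmod (b l j))^2)"
    by (auto simp: phi_def norm_mult power_mult_distrib)
  show "nsq (phi a b (k, l)) = nsq (a k) * nsq (b l)" unfolding nsq_def e using s by (simp add: nsq_def)
qed

lemma phi_norm: "sqrt (nsq (phi a b kl)) = sqrt (nsq (a (fst kl))) * sqrt (nsq (b (snd kl)))"
  by (cases kl) (simp add: phi_nsq real_sqrt_mult)

lemma hsS_summable_a: "(\<lambda>k. nsq (a k)) summable_on UNIV" using ha unfolding hsf_def by auto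
lemma hsS_summable_b: "(\<lambda>k. nsq (b k)) summable_on UNIV" using hb unfolding hsf_def by auto

lemma pair_summable:
  fixes f :: "'k \<Rightarrow> real" and g :: "'k \<Rightarrow> real"
  assumes "f summable_on UNIV" "g summable_on UNIV" "\<And>x. f x \<ge> 0" "\<And>y. g y \<ge> 0"
  shows "(\<lambda>kl. f (fst kl) * g (snd kl)) summable_on UNIV"
  using nonneg_prod_summable(1)[OF assms] by (simp add: case_prod_beta')

lemma M_bound: "l2 w \<Longrightarrow> cmod (Mx a b w kl) \<le> sqrt (nsq w) * (sqrt (nsq (a (fst kl))) * sqrt (nsq (b (snd kl))))"
  unfolding Mx_def using inner_bound[OF _ phi_l2] phi_norm by metis

lemma M_sq_summable:
  assumes w: "l2 w" shows "(\<lambda>kl. (cmod (Mx a b w kl))^2) summable_on UNIV"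
proof (rule summable_on_comparison_test)
  show "(\<lambda>kl. nsq w * (nsq (a (fst kl)) * nsq (b (snd kl)))) summable_on UNIV"
    by (intro summable_on_cmult_right pair_summable hsS_summable_a hsS_summable_b nsq_nonneg)
  fix kl :: "'k \<times> 'k"
  have "(cmod (Mx a b w kl))^2 \<le> (sqrt (nsq w) * (sqrt (nsq (a (fst kl))) * sqrt (nsq (b (snd kl)))))^2"
    by (rule power_mono[OF M_bound[OF w]]) auto
  then show "(cmod (Mx a b w kl))^2 \<le> nsq w * (nsq (a (fst kl)) * nsq (b (snd kl)))"
    by (simp add: power_mult_distrib nsq_nonneg)
qed auto

definition Xw :: "('i \<times> 'j \<Rightarrow> complex) \<Rightarrow> 'i \<times> 'j \<Rightarrow> complex" where
  "Xw w = (\<lambda>(i, j). infsum (\<lambda>(i', j'). infsum (\<lambda>k. cnj (a k i') * a k i) UNIV *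
                                         infsum (\<lambda>l. cnj (b l j') * b l j) UNIV * w (i', j')) UNIV)"

lemma col_summable_a: "(\<lambda>k. cmod (a k i) * sqrt (nsq (a k))) summable_on UNIV"
  using hsf_cs[OF ha hsf_col_l2[OF ha, of i]] .
lemma col_summable_b: "(\<lambda>k. cmod (b k j) * sqrt (nsq (b k))) summable_on UNIV"
  using hsf_cs[OF hb hsf_col_l2[OF hb, of j]] .

lemma Xw_formula:
  assumes w: "l2 w"
  shows "Xw w = (\<lambda>p. infsum (\<lambda>kl. Mx a b w kl * phi a b kl p) UNIV)"
proof
  fix p :: "'i \<times> 'j" obtain i j where p: "p = (i, j)" by (cases p)
  define \<beta> where "\<beta> = (\<lambda>(k, l). cnj (a k i) * cnj (b l j))"
  have prod: "infsum (\<lambda>k. cnj (a k i') * a k i) UNIV * infsum (\<lambda>l. cnj (b l j') * b l j) UNIV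
        = cnj (infsum (\<lambda>kl. \<beta> kl * phi a b kl (i', j')) UNIV)" for i' j'
  proof -
    have s1: "(\<lambda>k. norm (cnj (a k i') * a k i)) summable_on UNIV"
      using cs_summable(1)[OF hsf_col_l2[OF ha, of i'] hsf_col_l2[OF ha, of i]] by (simp add: norm_mult)
    have s2: "(\<lambda>l. norm (cnj (b l j') * b l j)) summable_on UNIV"
      using cs_summable(1)[OF hsf_col_l2[OF hb, of j'] hsf_col_l2[OF hb, of j]] by (simp add: norm_mult)
    have "infsum (\<lambda>k. cnj (a k i') * a k i) UNIV * infsum (\<lambda>l. cnj (b l j') * b l j) UNIV
          = infsum (\<lambda>(k, l). cnj (a k i') * a k i * (cnj (b l j') * b l j)) UNIV"
      by (rule complex_prod_infsum(2)[OF s1 s2])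
    also have "\<dots> = infsum (\<lambda>kl. cnj (\<beta> kl * phi a b kl (i', j'))) UNIV"
      by (rule infsum_cong) (auto simp: \<beta>_def phi_def mult_ac)
    also have "\<dots> = cnj (infsum (\<lambda>kl. \<beta> kl * phi a b kl (i', j')) UNIV)"
      by (rule infsum_cnj)
    finally show ?thesis .
  qed
  have bs: "(\<lambda>kl. cmod (\<beta> kl) * sqrt (nsq (phi a b kl))) summable_on UNIV"
  proof -
    have "(\<lambda>kl. (cmod (a (fst kl) i) * sqrt (nsq (a (fst kl)))) * (cmod (b (snd kl) j) * sqrt (nsq (b (snd kl))))) summable_on UNIV"
      by (rule pair_summable[OF col_summable_a col_summable_b]) (auto simp: nsq_nonneg)
    then show ?thesis
      by (simp add: \<beta>_def phi_norm case_prod_beta norm_mult mult_ac)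
  qed
  have "(\<lambda>(i', j'). infsum (\<lambda>k. cnj (a k i') * a k i) UNIV * infsum (\<lambda>l. cnj (b l j') * b l j) UNIV * w (i', j'))
        = (\<lambda>q. w q * cnj (infsum (\<lambda>kl. \<beta> kl * phi a b kl q) UNIV))"
  proof (rule ext, clarify)
    fix i' j'
    show "infsum (\<lambda>k. cnj (a k i') * a k i) UNIV * infsum (\<lambda>l. cnj (b l j') * b l j) UNIV * w (i', j')
          = w (i', j') * cnj (infsum (\<lambda>kl. \<beta> kl * phi a b kl (i', j')) UNIV)"
      by (subst prod) (rule mult.commute)
  qed
  then have "Xw w p = infsum (\<lambda>q. w q * cnj (infsum (\<lambda>kl. \<beta> kl * phi a b kl q) UNIV)) UNIV"
    unfolding p Xw_def by simp
  also have "\<dots> = infsum (\<lambda>kl. cnj (\<beta> kl) * l2_inner w (phi a b kl)) UNIV"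
    by (rule gen_fubini(3)[OF phi_l2 w bs])
  also have "\<dots> = infsum (\<lambda>kl. Mx a b w kl * phi a b kl p) UNIV"
    by (rule infsum_cong) (auto simp: \<beta>_def Mx_def phi_def p mult_ac)
  finally show "Xw w p = infsum (\<lambda>kl. Mx a b w kl * phi a b kl p) UNIV" .
qed

lemma M_summable_weighted:
  assumes w: "l2 w" shows "(\<lambda>kl. cmod (Mx a b w kl) * sqrt (nsq (phi a b kl))) summable_on UNIV"
proof (rule summable_on_comparison_test)
  show "(\<lambda>kl. sqrt (nsq w) * (nsq (a (fst kl)) * nsq (b (snd kl)))) summable_on UNIV"
    by (intro summable_on_cmult_right pair_summable hsS_summable_a hsS_summable_b nsq_nonneg)
  fix kl :: "'k \<times> 'k"
  have "cmod (Mx a b w kl) * sqrt (nsq (phi a b kl)) \<le>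
        sqrt (nsq w) * (sqrt (nsq (a (fst kl))) * sqrt (nsq (b (snd kl)))) * sqrt (nsq (phi a b kl))"
    by (rule mult_right_mono[OF M_bound[OF w]]) (auto simp: nsq_nonneg)
  also have "\<dots> = sqrt (nsq w) * (nsq (a (fst kl)) * nsq (b (snd kl)))"
    by (simp add: phi_norm nsq_nonneg mult_ac)
  finally show "cmod (Mx a b w kl) * sqrt (nsq (phi a b kl)) \<le> sqrt (nsq w) * (nsq (a (fst kl)) * nsq (b (snd kl)))" .
qed (auto intro: mult_nonneg_nonneg simp: nsq_nonneg)

definition Fw :: "('i \<times> 'j \<Rightarrow> complex) \<Rightarrow> real" where
  "Fw w = infsum (\<lambda>kl. (cmod (Mx a b w kl))^2) UNIV"

lemma Fw_nonneg: "0 \<le> Fw w" unfolding Fw_def by (rule infsum_nonneg) auto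

lemma Xw_form:
  assumes w: "l2 w"
  shows "(\<lambda>p. Xw w p * cnj (w p)) summable_on UNIV"
    and "l2_inner (Xw w) w = complex_of_real (Fw w)"
proof -
  have g2: "(\<lambda>p. w p * cnj (infsum (\<lambda>kl. Mx a b w kl * phi a b kl p) UNIV)) summable_on UNIV"
    by (rule gen_fubini(2)[OF phi_l2 w M_summable_weighted[OF w]])
  have g3: "infsum (\<lambda>p. w p * cnj (infsum (\<lambda>kl. Mx a b w kl * phi a b kl p) UNIV)) UNIV
           = infsum (\<lambda>kl. cnj (Mx a b w kl) * l2_inner w (phi a b kl)) UNIV"
    by (rule gen_fubini(3)[OF phi_l2 w M_summable_weighted[OF w]])
  have "(\<lambda>p. cnj (w p * cnj (Xw w p))) summable_on UNIV"
    using g2 unfolding Xw_formula[OF w] summable_on_cnj_iff .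
  then show "(\<lambda>p. Xw w p * cnj (w p)) summable_on UNIV" by (simp add: mult.commute)
  have i0: "l2_inner w (Xw w) = infsum (\<lambda>p. w p * cnj (Xw w p)) UNIV"
    by (simp only: l2_inner_def)
  have i1: "l2_inner w (Xw w) = infsum (\<lambda>kl. cnj (Mx a b w kl) * l2_inner w (phi a b kl)) UNIV"
    unfolding i0 using g3 by (simp only: Xw_formula[OF w])
  have i2: "\<dots> = infsum (\<lambda>kl. complex_of_real ((cmod (Mx a b w kl))^2)) UNIV"
    by (rule infsum_cong) (subst complex_norm_square, simp add: Mx_def mult.commute)
  have "l2_inner (Xw w) w = cnj (l2_inner w (Xw w))" by (rule inner_cnj_sym)
  also have "\<dots> = cnj (complex_of_real (Fw w))"
    unfolding i1 i2 Fw_def infsum_of_real_c ..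
  finally show "l2_inner (Xw w) w = complex_of_real (Fw w)" by simp
qed

definition vv :: "'i \<times> 'j \<Rightarrow> complex" where
  "vv = (\<lambda>(i, j). infsum (\<lambda>k. a k i * b k j) UNIV)"

lemma diag_summable: "(\<lambda>k. cmod 1 * sqrt (nsq (phi a b (k, k)))) summable_on UNIV"
proof (rule summable_on_comparison_test)
  show "(\<lambda>k. nsq (a k) + nsq (b k)) summable_on UNIV"
    by (intro summable_on_add hsS_summable_a hsS_summable_b)
  fix k
  have "sqrt (nsq (a k)) * sqrt (nsq (b k)) \<le> nsq (a k) + nsq (b k)"
  proof -
    have "2 * (sqrt (nsq (a k)) * sqrt (nsq (b k))) \<le> ((sqrt (nsq (a k)))^2 + (sqrt (nsq (b k)))^2)"
      using zero_le_power2[of "sqrt (nsq (a k)) - sqrt (nsq (b k))"]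
      unfolding power2_diff by linarith
    moreover have "0 \<le> sqrt (nsq (a k)) * sqrt (nsq (b k))" by (simp add: nsq_nonneg)
    moreover have "(sqrt (nsq (a k)))^2 = nsq (a k)" "(sqrt (nsq (b k)))^2 = nsq (b k)"
      by (simp_all add: nsq_nonneg)
    ultimately show ?thesis by linarith
  qed
  then show "cmod 1 * sqrt (nsq (phi a b (k, k))) \<le> nsq (a k) + nsq (b k)"
    by (simp add: phi_norm)
qed (auto simp: nsq_nonneg)

lemma vv_form:
  assumes w: "l2 w"
  shows "(\<lambda>p. w p * cnj (vv p)) summable_on UNIV"
    and "l2_inner w vv = infsum (\<lambda>k. Mx a b w (k, k)) UNIV"
proof -
  have e: "vv = (\<lambda>p. infsum (\<lambda>k. 1 * phi a b (k, k) p) UNIV)"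
    by (auto simp: vv_def phi_def)
  show "(\<lambda>p. w p * cnj (vv p)) summable_on UNIV"
    unfolding e by (rule gen_fubini(2)[OF phi_l2 w diag_summable])
  show "l2_inner w vv = infsum (\<lambda>k. Mx a b w (k, k)) UNIV"
    unfolding l2_inner_def e gen_fubini(3)[OF phi_l2 w diag_summable] Mx_def by simp
qed

end

interpretation fvs: vector_space "\<lambda>(c::complex) (f::'a \<Rightarrow> complex) i. c * f i"
  by unfold_locales (auto simp: fun_eq_iff plus_fun_def algebra_simps)

lemma sum_fun_apply: "(\<Sum>v\<in>t. f v) x = (\<Sum>v\<in>t. f v x)" for f :: "'b \<Rightarrow> 'a \<Rightarrow> complex"
  by (induction t rule: infinite_finite_induct) (auto simp: plus_fun_def zero_fun_def)

lemma lin_indep_independent: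
  assumes "lin_indep (S :: ('a \<Rightarrow> complex) set)" shows "fvs.independent S"
proof
  assume "fvs.dependent S"
  then obtain t u where t: "finite t" "t \<subseteq> S" "(\<Sum>v\<in>t. (\<lambda>i. u v * v i)) = 0" "\<exists>v\<in>t. u v \<noteq> 0"
    unfolding fvs.dependent_explicit by blast
  define c where "c v = (if v \<in> t then u v else 0)" for v
  have fS: "finite S" using assms unfolding lin_indep_def by blast
  have "(\<lambda>i. \<Sum>s\<in>S. c s * s i) = (\<lambda>i. \<Sum>s\<in>t. u s * s i)"
  proof
    fix i
    have "(\<Sum>s\<in>S. c s * s i) = (\<Sum>s\<in>t. c s * s i)"
      by (rule sum.mono_neutral_right[OF fS t(2)]) (auto simp: c_def)
    then show "(\<Sum>s\<in>S. c s * s i) = (\<Sum>s\<in>t. u s * s i)" by (simp add: c_def)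
  qed
  also have "\<dots> = (\<lambda>i. 0)"
    using fun_cong[OF t(3)] by (auto simp: sum_fun_apply zero_fun_def)
  finally have "\<forall>s\<in>S. c s = 0" using assms unfolding lin_indep_def by blast
  moreover obtain v where v: "v \<in> t" "u v \<noteq> 0" using t(4) by blast
  ultimately have "c v = 0" using t(2) by blast
  then show False using v by (simp add: c_def)
qed

lemma lin_indep_card_span:
  fixes S :: "('a \<Rightarrow> complex) set"
  assumes "lin_indep S" "finite T" "S \<subseteq> fvs.span T" shows "card S \<le> card T"
  using fvs.independent_span_bound[OF assms(2) lin_indep_independent[OF assms(1)] assms(3)] by blast

lemma finite_support_in_span:
  assumes "finite E" "\<And>i. i \<notin> E \<Longrightarrow> x i = 0" shows "x \<in> fvs.span (ket ` E)"
proof -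
  have "x = (\<Sum>e\<in>E. (\<lambda>i. x e * ket e i))"
    by (auto simp: fun_eq_iff sum_fun_apply ket_def assms(2) if_distrib[of "\<lambda>t. _ * t"] cong: if_cong)
       (use assms in \<open>auto simp: sum.delta\<close>)
  also have "\<dots> \<in> fvs.span (ket ` E)"
    by (intro fvs.span_sum fvs.span_scale fvs.span_base) auto
  finally show ?thesis .
qed

lemma lin_indep_support_card:
  assumes "lin_indep S" "finite E" "\<And>x i. x \<in> S \<Longrightarrow> i \<notin> E \<Longrightarrow> x i = 0"
  shows "card S \<le> card E"
proof -
  have "card S \<le> card (ket ` E)"
    by (rule lin_indep_card_span[OF assms(1)]) (use assms(2) finite_support_in_span[OF assms(2)] assms(3) in blast)+
  also have "\<dots> \<le> card E" using assms(2) by (rule card_image_le)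
  finally show ?thesis .
qed

lemma lin_indep_finite_type:
  fixes S :: "('a::finite \<Rightarrow> complex) set"
  assumes "lin_indep S" shows "card S \<le> CARD('a)"
  using lin_indep_support_card[OF assms, of UNIV] by simp

definition subsp :: "('a \<Rightarrow> complex) set \<Rightarrow> bool" where
  "subsp V \<longleftrightarrow> (\<forall>x\<in>V. l2 x) \<and> (\<lambda>_. 0) \<in> V \<and> (\<forall>x\<in>V. \<forall>y\<in>V. (\<lambda>i. x i + y i) \<in> V)
     \<and> (\<forall>c. \<forall>x\<in>V. (\<lambda>i. c * x i) \<in> V)"

definition dimle :: "('a \<Rightarrow> complex) set \<Rightarrow> nat \<Rightarrow> bool" where
  "dimle V n \<longleftrightarrow> (\<forall>S. S \<subseteq> V \<longrightarrow> lin_indep S \<longrightarrow> card S \<le> n)"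

definition orthonormal :: "('a \<Rightarrow> complex) set \<Rightarrow> bool" where
  "orthonormal Q \<longleftrightarrow> (\<forall>q\<in>Q. l2 q) \<and> (\<forall>q\<in>Q. \<forall>q'\<in>Q. l2_inner q q' = (if q = q' then 1 else 0))"

lemma subsp_sum:
  assumes "subsp V" "finite F" "\<And>s. s \<in> F \<Longrightarrow> f s \<in> V"
  shows "(\<lambda>i. \<Sum>s\<in>F. \<alpha> s * f s i) \<in> V"
  using assms(2,3)
proof (induction F rule: finite_induct)
  case empty then show ?case using assms(1) unfolding subsp_def by simp
next
  case (insert a F)
  then have "(\<lambda>i. \<alpha> a * f a i + (\<Sum>s\<in>F. \<alpha> s * f s i)) \<in> V"
    using assms(1) unfolding subsp_def by auto
  then show ?case using insert by simp
qed

lemma subsp_diff: "subsp V \<Longrightarrow> x \<in> V \<Longrightarrow> y \<in> V \<Longrightarrow> (\<lambda>i. x i - y i) \<in> V"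
proof -
  assume a: "subsp V" "x \<in> V" "y \<in> V"
  then have "(\<lambda>i. (-1) * y i) \<in> V" unfolding subsp_def by blast
  moreover have "\<forall>x\<in>V. \<forall>y\<in>V. (\<lambda>i. x i + y i) \<in> V" using a unfolding subsp_def by blast
  ultimately have "(\<lambda>i. x i + (-1) * y i) \<in> V" using a(2) by force
  then show ?thesis by simp
qed

lemma inner_sum_right:
  "finite F \<Longrightarrow> (\<And>s. s \<in> F \<Longrightarrow> l2 (f s)) \<Longrightarrow> l2 z \<Longrightarrow>
   l2_inner z (\<lambda>i. \<Sum>s\<in>F. \<alpha> s * f s i) = (\<Sum>s\<in>F. cnj (\<alpha> s) * l2_inner z (f s))"
proof -
  assume a: "finite F" "\<And>s. s \<in> F \<Longrightarrow> l2 (f s)" "l2 z"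
  have "l2_inner z (\<lambda>i. \<Sum>s\<in>F. \<alpha> s * f s i) = cnj (l2_inner (\<lambda>i. \<Sum>s\<in>F. \<alpha> s * f s i) z)"
    by (rule inner_cnj_sym)
  also have "l2_inner (\<lambda>i. \<Sum>s\<in>F. \<alpha> s * f s i) z = (\<Sum>s\<in>F. \<alpha> s * l2_inner (f s) z)"
    using a by (subst inner_sum_left) (auto intro: l2_scale simp: inner_scale_left)
  finally show ?thesis
    by (simp add: cnj_sum) (metis inner_cnj_sym complex_cnj_cnj)
qed

lemma orthonormal_lin_indep:
  assumes "orthonormal Q" "finite Q" shows "lin_indep Q"
  unfolding lin_indep_def
proof (intro conjI allI impI ballI)
  fix c q assume h: "(\<lambda>i. \<Sum>s\<in>Q. c s * s i) = (\<lambda>i. 0)" and q: "q \<in> Q"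
  have l2: "\<And>s. s \<in> Q \<Longrightarrow> l2 s" "l2 q" using assms(1) q unfolding orthonormal_def by auto
  have "l2_inner (\<lambda>i. \<Sum>s\<in>Q. c s * s i) q = (\<Sum>s\<in>Q. c s * l2_inner s q)"
    using assms(2) l2 by (subst inner_sum_left) (auto intro: l2_scale simp: inner_scale_left)
  also have "\<dots> = (\<Sum>s\<in>Q. if s = q then c s else 0)"
    using assms(1) q unfolding orthonormal_def by (intro sum.cong) auto
  also have "\<dots> = c q" using assms(2) q by simp
  finally show "c q = 0" using h by (simp add: l2_inner_def)
qed (use assms in auto)

lemma nsq_pos_normalize:
  assumes "l2 r" "nsq r \<noteq> 0"
  shows "nsq (\<lambda>i. complex_of_real (1 / sqrt (nsq r)) * r i) = 1"
proof -
  have "nsq (\<lambda>i. complex_of_real (1 / sqrt (nsq r)) * r i) = (cmod (complex_of_real (1 / sqrt (nsq r))))^2 * nsq r"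
    by (rule nsq_scale[OF assms(1)])
  also have "\<dots> = 1" using assms(2) nsq_nonneg[of r] by (simp add: norm_divide power_divide)
  finally show ?thesis .
qed

lemma onb_exists:
  assumes V: "subsp V" and dV: "dimle V n"
  obtains Q where "Q \<subseteq> V" "finite Q" "orthonormal Q" "card Q \<le> n"
    "\<And>u. u \<in> V \<Longrightarrow> u = (\<lambda>i. \<Sum>q\<in>Q. l2_inner u q * q i)"
proof -
  define K where "K = {card Q | Q. Q \<subseteq> V \<and> finite Q \<and> orthonormal Q}"
  have Kb: "k \<le> n" if "k \<in> K" for k
    using that dV orthonormal_lin_indep unfolding K_def dimle_def by blast
  have "0 \<in> K" unfolding K_def orthonormal_def by (intro CollectI exI[of _ "{}"]) auto
  have fK: "finite K" using Kb by (meson finite_nat_set_iff_bounded_le)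
  define m where "m = Max K"
  have "m \<in> K" unfolding m_def using fK \<open>0 \<in> K\<close> by (intro Max_in) auto
  then obtain Q where Q: "Q \<subseteq> V" "finite Q" "orthonormal Q" "card Q = m" unfolding K_def by blast
  have mmax: "k \<le> m" if "k \<in> K" for k unfolding m_def using fK that by simp
  have lQ: "\<And>q. q \<in> Q \<Longrightarrow> l2 q" using Q(3) unfolding orthonormal_def by auto
  have lV: "\<And>x. x \<in> V \<Longrightarrow> l2 x" using V unfolding subsp_def by auto
  have expand: "u = (\<lambda>i. \<Sum>q\<in>Q. l2_inner u q * q i)" if u: "u \<in> V" for u
  proof (rule ccontr)
    assume ne: "u \<noteq> (\<lambda>i. \<Sum>q\<in>Q. l2_inner u q * q i)"
    define r where "r = (\<lambda>i. u i - (\<Sum>q\<in>Q. l2_inner u q * q i))"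
    have sV: "(\<lambda>i. \<Sum>q\<in>Q. l2_inner u q * q i) \<in> V" by (rule subsp_sum[OF V Q(2)]) (use Q(1) in auto)
    have rV: "r \<in> V" unfolding r_def by (rule subsp_diff[OF V u sV])
    have lr: "l2 r" using lV[OF rV] .
    have orth: "l2_inner r q' = 0" if q': "q' \<in> Q" for q'
    proof -
      have "l2_inner r q' = l2_inner u q' - l2_inner (\<lambda>i. \<Sum>q\<in>Q. l2_inner u q * q i) q'"
        unfolding r_def using lV[OF u] lQ q' Q(2)
        by (subst inner_add_left[of u "\<lambda>i. - (\<Sum>q\<in>Q. l2_inner u q * q i)", simplified])
           (auto intro!: l2_scale[of _ "-1", simplified] l2_sum l2_scale simp: inner_scale_left[of "-1", simplified])
      also have "l2_inner (\<lambda>i. \<Sum>q\<in>Q. l2_inner u q * q i) q' = (\<Sum>q\<in>Q. l2_inner u q * l2_inner q q')"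
        using Q(2) lQ q' by (subst inner_sum_left) (auto intro: l2_scale simp: inner_scale_left)
      also have "\<dots> = (\<Sum>q\<in>Q. if q = q' then l2_inner u q else 0)"
        using Q(3) q' unfolding orthonormal_def by (intro sum.cong) auto
      also have "\<dots> = l2_inner u q'" using Q(2) q' by simp
      finally show ?thesis by simp
    qed
    have "r \<noteq> (\<lambda>_. 0)" using ne unfolding r_def by (auto simp: fun_eq_iff)
    then have nz: "nsq r \<noteq> 0" using nsq_eq_0[OF lr] by blast
    define q0 where "q0 = (\<lambda>i. complex_of_real (1 / sqrt (nsq r)) * r i)"
    have q0V: "q0 \<in> V" unfolding q0_def using V rV unfolding subsp_def by blast
    have lq0: "l2 q0" using lV[OF q0V] .
    have q00: "l2_inner q0 q0 = 1" using nsq_pos_normalize[OF lr nz] by (simp add: inner_self q0_def)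
    have q0q: "l2_inner q0 q = 0" if "q \<in> Q" for q
      unfolding q0_def inner_scale_left using orth[OF that] by simp
    have qq0: "l2_inner q q0 = 0" if "q \<in> Q" for q
      using q0q[OF that] inner_cnj_sym[of q q0] by simp
    have notin: "q0 \<notin> Q" using q0q q00 by force
    have "orthonormal (insert q0 Q)"
      using Q(3) q00 q0q qq0 lq0 notin unfolding orthonormal_def by auto
    then have "card (insert q0 Q) \<in> K" unfolding K_def using Q q0V by blast
    then have "card (insert q0 Q) \<le> m" by (rule mmax)
    then show False using notin Q(2,4) by simp
  qed
  show ?thesis
    by (rule that[OF Q(1-3)]) (use Kb \<open>m \<in> K\<close> Q(4) expand in auto)
qed


lemma infsum_diff':
  fixes f g :: "'a \<Rightarrow> 'b::real_normed_vector"
  assumes "f summable_on A" "g summable_on A"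
  shows "infsum (\<lambda>x. f x - g x) A = infsum f A - infsum g A"
proof -
  have "infsum (\<lambda>x. f x + - g x) A = infsum f A + infsum (\<lambda>x. - g x) A"
    by (rule infsum_add[OF assms(1) summable_on_uminus[THEN iffD2, OF assms(2)]])
  then show ?thesis by (simp add: infsum_uminus)
qed

lemma infsum_finsum:
  fixes f :: "'q \<Rightarrow> 'a \<Rightarrow> 'b::real_normed_vector"
  assumes "finite Q" "\<And>q. q \<in> Q \<Longrightarrow> f q summable_on A"
  shows "(\<lambda>x. \<Sum>q\<in>Q. f q x) summable_on A" and "infsum (\<lambda>x. \<Sum>q\<in>Q. f q x) A = (\<Sum>q\<in>Q. infsum (f q) A)"
proof -
  have "(\<lambda>x. \<Sum>q\<in>Q. f q x) summable_on A \<and> infsum (\<lambda>x. \<Sum>q\<in>Q. f q x) A = (\<Sum>q\<in>Q. infsum (f q) A)"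
    using assms
  proof (induction Q rule: finite_induct)
    case empty then show ?case by simp
  next
    case (insert a F)
    then have IH: "(\<lambda>x. \<Sum>q\<in>F. f q x) summable_on A" "infsum (\<lambda>x. \<Sum>q\<in>F. f q x) A = (\<Sum>q\<in>F. infsum (f q) A)"
      by auto
    have fa: "f a summable_on A" using insert by auto
    show ?case using insert(1,2) IH fa
      by (simp add: summable_on_add infsum_add)
  qed
  then show "(\<lambda>x. \<Sum>q\<in>Q. f q x) summable_on A" "infsum (\<lambda>x. \<Sum>q\<in>Q. f q x) A = (\<Sum>q\<in>Q. infsum (f q) A)"
    by auto
qed

lemma inner_diff_left:
  assumes "l2 x" "l2 y" "l2 z"
  shows "l2_inner (\<lambda>i. x i - y i) z = l2_inner x z - l2_inner y z"
  unfolding l2_inner_def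
  by (simp add: left_diff_distrib infsum_diff' inner_summable assms)

lemma inner_diff_right:
  assumes "l2 x" "l2 y" "l2 z"
  shows "l2_inner z (\<lambda>i. x i - y i) = l2_inner z x - l2_inner z y"
  using inner_diff_left[OF assms] inner_cnj_sym by (metis complex_cnj_diff)

lemma orthonormal_nsq: "orthonormal Q \<Longrightarrow> q \<in> Q \<Longrightarrow> nsq q = 1"
  unfolding orthonormal_def using inner_self[of q] by auto

lemma resid_orth:
  assumes Q: "orthonormal Q" "finite Q" and x: "l2 x" and q': "q' \<in> Q"
  shows "l2_inner (\<lambda>i. x i - (\<Sum>q\<in>Q. l2_inner x q * q i)) q' = 0"
proof -
  have lQ: "\<And>q. q \<in> Q \<Longrightarrow> l2 q" using Q(1) unfolding orthonormal_def by auto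
  have lsum: "l2 (\<lambda>i. \<Sum>q\<in>Q. l2_inner x q * q i)" using Q(2) lQ by (intro l2_sum l2_scale) auto
  have "l2_inner (\<lambda>i. x i - (\<Sum>q\<in>Q. l2_inner x q * q i)) q'
        = l2_inner x q' - l2_inner (\<lambda>i. \<Sum>q\<in>Q. l2_inner x q * q i) q'"
    by (rule inner_diff_left[OF x lsum lQ[OF q']])
  also have "l2_inner (\<lambda>i. \<Sum>q\<in>Q. l2_inner x q * q i) q' = (\<Sum>q\<in>Q. l2_inner x q * l2_inner q q')"
    using Q(2) lQ q' by (subst inner_sum_left) (auto intro: l2_scale simp: inner_scale_left)
  also have "\<dots> = (\<Sum>q\<in>Q. if q = q' then l2_inner x q else 0)"
    using Q(1) q' unfolding orthonormal_def by (intro sum.cong) auto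
  also have "\<dots> = l2_inner x q'" using Q(2) q' by simp
  finally show ?thesis by simp
qed

lemma parseval:
  assumes Q: "orthonormal Q" "finite Q" and u: "l2 u"
    and e: "u = (\<lambda>i. \<Sum>q\<in>Q. l2_inner u q * q i)"
  shows "nsq u = (\<Sum>q\<in>Q. (cmod (l2_inner u q))^2)"
proof -
  have lQ: "\<And>q. q \<in> Q \<Longrightarrow> l2 q" using Q(1) unfolding orthonormal_def by auto
  have "complex_of_real (nsq u) = l2_inner u u" by (simp add: inner_self)
  also have "\<dots> = l2_inner (\<lambda>i. \<Sum>q\<in>Q. l2_inner u q * q i) u"
    by (rule arg_cong[where f="\<lambda>x. l2_inner x u"]) (rule e)
  also have "\<dots> = (\<Sum>q\<in>Q. l2_inner u q * l2_inner q u)"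
    using Q(2) lQ u by (subst inner_sum_left) (auto intro: l2_scale simp: inner_scale_left)
  also have "\<dots> = (\<Sum>q\<in>Q. complex_of_real ((cmod (l2_inner u q))^2))"
    by (intro sum.cong refl) (metis complex_norm_square inner_cnj_sym)
  also have "\<dots> = complex_of_real (\<Sum>q\<in>Q. (cmod (l2_inner u q))^2)" by simp
  finally show ?thesis by (simp only: of_real_eq_iff)
qed

lemma closure_subsp:
  assumes V: "subsp V" and dV: "dimle V n"
  shows "l2_closure V \<subseteq> V"
proof
  fix x assume "x \<in> l2_closure V"
  then have x: "l2 x" and appr: "\<And>e. e > 0 \<Longrightarrow> \<exists>y\<in>V. l2_norm (\<lambda>i. x i - y i) < e"
    unfolding l2_closure_def by auto
  obtain Q where Q: "Q \<subseteq> V" "finite Q" "orthonormal Q" "card Q \<le> n"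
    and ex: "\<And>u. u \<in> V \<Longrightarrow> u = (\<lambda>i. \<Sum>q\<in>Q. l2_inner u q * q i)"
    using onb_exists[OF V dV] by blast
  have lQ: "\<And>q. q \<in> Q \<Longrightarrow> l2 q" using Q(3) unfolding orthonormal_def by auto
  have lV: "\<And>x. x \<in> V \<Longrightarrow> l2 x" using V unfolding subsp_def by auto
  define p where "p = (\<lambda>i. \<Sum>q\<in>Q. l2_inner x q * q i)"
  have pV: "p \<in> V" unfolding p_def by (rule subsp_sum[OF V Q(2)]) (use Q(1) in auto)
  define d where "d = (\<lambda>i. x i - p i)"
  have ld: "l2 d" unfolding d_def by (intro l2_diff x lV pV)
  have dq: "l2_inner d q = 0" if "q \<in> Q" for q
    unfolding d_def p_def by (rule resid_orth[OF Q(3,2) x that])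
  have dV0: "l2_inner d y = 0" if y: "y \<in> V" for y
  proof -
    have "l2_inner d y = l2_inner d (\<lambda>i. \<Sum>q\<in>Q. l2_inner y q * q i)"
      by (rule arg_cong[where f="l2_inner d"]) (rule ex[OF y])
    also have "\<dots> = (\<Sum>q\<in>Q. cnj (l2_inner y q) * l2_inner d q)"
      by (rule inner_sum_right[OF Q(2) lQ ld])
    also have "\<dots> = 0" using dq by simp
    finally show ?thesis .
  qed
  have ndx: "complex_of_real (nsq d) = l2_inner d x"
  proof -
    have "complex_of_real (nsq d) = l2_inner d d" by (simp add: inner_self)
    also have "\<dots> = l2_inner d x - l2_inner d p"
      using inner_diff_right[OF x lV[OF pV] ld] by (simp add: d_def)
    finally show ?thesis using dV0[OF pV] by simp
  qed
  have "nsq d = 0"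
  proof (rule ccontr)
    assume "nsq d \<noteq> 0"
    then have pos: "nsq d > 0" using nsq_nonneg[of d] by simp
    obtain y where y: "y \<in> V" "l2_norm (\<lambda>i. x i - y i) < sqrt (nsq d)"
      using appr[of "sqrt (nsq d)"] pos by auto
    have "l2_inner d x = l2_inner d (\<lambda>i. x i - y i) + l2_inner d y"
      using inner_diff_right[OF x lV[OF y(1)] ld] by simp
    then have "l2_inner d x = l2_inner d (\<lambda>i. x i - y i)" using dV0[OF y(1)] by simp
    then have "nsq d = cmod (l2_inner d (\<lambda>i. x i - y i))" using ndx
      by (metis norm_of_real abs_of_nonneg nsq_nonneg)
    also have "\<dots> \<le> sqrt (nsq d) * sqrt (nsq (\<lambda>i. x i - y i))"
      by (rule inner_bound[OF ld l2_diff[OF x lV[OF y(1)]]])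
    also have "\<dots> < sqrt (nsq d) * sqrt (nsq d)"
      using y(2) pos by (intro mult_strict_left_mono) (auto simp: l2_norm_nsq)
    also have "\<dots> = nsq d" using pos by simp
    finally show False by simp
  qed
  then have "d = (\<lambda>_. 0)" by (rule nsq_eq_0[OF ld])
  then have "x = p" unfolding d_def by (auto simp: fun_eq_iff)
  then show "x \<in> V" using pV by simp
qed

lemma trace_bound:
  fixes z :: "'k \<Rightarrow> 'k \<Rightarrow> complex"
  assumes U: "subsp U" "dimle U n" and z: "\<And>l. z l \<in> U" and zs: "(\<lambda>l. nsq (z l)) summable_on UNIV"
  shows "(cmod (infsum (\<lambda>l. z l l) UNIV))^2 \<le> real n * infsum (\<lambda>l. nsq (z l)) UNIV"
proof -
  obtain Q where Q: "Q \<subseteq> U" "finite Q" "orthonormal Q" "card Q \<le> n"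
    and ex: "\<And>u. u \<in> U \<Longrightarrow> u = (\<lambda>i. \<Sum>q\<in>Q. l2_inner u q * q i)"
    using onb_exists[OF U] by blast
  have lQ: "\<And>q. q \<in> Q \<Longrightarrow> l2 q" using Q(3) unfolding orthonormal_def by auto
  have lU: "\<And>x. x \<in> U \<Longrightarrow> l2 x" using U unfolding subsp_def by auto
  define cq where "cq q = (\<lambda>l. l2_inner (z l) q)" for q
  have lcq: "l2 (cq q)" if q: "q \<in> Q" for q
    unfolding l2_def cq_def
  proof (rule summable_on_comparison_test[OF zs])
    fix l
    show "(cmod (l2_inner (z l) q))^2 \<le> nsq (z l)"
      using inner_bound2[OF lU[OF z] lQ[OF q]] orthonormal_nsq[OF Q(3) q] by simp
  qed auto
  define f where "f q l = cq q l * q l" for q l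
  have fs: "f q summable_on UNIV" if q: "q \<in> Q" for q
    using inner_summable[OF lcq[OF q] l2_cnj[OF lQ[OF q]]] unfolding f_def by simp
  have zexp: "z l l = (\<Sum>q\<in>Q. f q l)" for l
    using fun_cong[OF ex[OF z[of l]], of l] unfolding f_def cq_def by simp
  have T: "infsum (\<lambda>l. z l l) UNIV = (\<Sum>q\<in>Q. infsum (f q) UNIV)"
    unfolding zexp by (rule infsum_finsum(2)[OF Q(2) fs])
  have tb: "(cmod (infsum (f q) UNIV))^2 \<le> nsq (cq q)" if q: "q \<in> Q" for q
  proof -
    have "infsum (f q) UNIV = l2_inner (cq q) (\<lambda>l. cnj (q l))"
      unfolding l2_inner_def f_def by simp
    then show ?thesis
      using inner_bound2[OF lcq[OF q] l2_cnj[OF lQ[OF q]]] orthonormal_nsq[OF Q(3) q] by simp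
  qed
  have "cmod (infsum (\<lambda>l. z l l) UNIV) \<le> (\<Sum>q\<in>Q. cmod (infsum (f q) UNIV))"
    unfolding T by (rule norm_sum)
  then have "(cmod (infsum (\<lambda>l. z l l) UNIV))^2 \<le> (\<Sum>q\<in>Q. cmod (infsum (f q) UNIV) * 1)^2"
    by (intro power_mono) auto
  also have "\<dots> \<le> (\<Sum>q\<in>Q. (cmod (infsum (f q) UNIV))^2) * (\<Sum>q\<in>Q. 1^2)"
    by (rule Cauchy_Schwarz_ineq_sum)
  also have "\<dots> = real (card Q) * (\<Sum>q\<in>Q. (cmod (infsum (f q) UNIV))^2)" by simp
  also have "\<dots> \<le> real (card Q) * (\<Sum>q\<in>Q. nsq (cq q))"
    by (intro mult_left_mono sum_mono tb) auto
  also have "(\<Sum>q\<in>Q. nsq (cq q)) = infsum (\<lambda>l. \<Sum>q\<in>Q. (cmod (cq q l))^2) UNIV"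
    unfolding nsq_def using lcq by (subst infsum_finsum(2)[OF Q(2)]) (auto simp: l2_def)
  also have "\<dots> = infsum (\<lambda>l. nsq (z l)) UNIV"
  proof (rule infsum_cong)
    fix l
    show "(\<Sum>q\<in>Q. (cmod (cq q l))^2) = nsq (z l)"
      unfolding cq_def by (rule parseval[OF Q(3,2) lU[OF z] ex[OF z], symmetric])
  qed
  also have "real (card Q) * infsum (\<lambda>l. nsq (z l)) UNIV \<le> real n * infsum (\<lambda>l. nsq (z l)) UNIV"
    using Q(4) by (intro mult_right_mono) (auto intro: infsum_nonneg simp: nsq_nonneg)
  finally show ?thesis .
qed

definition Uad :: "('k \<Rightarrow> 'i \<Rightarrow> complex) \<Rightarrow> ('k \<Rightarrow> complex) set" where
  "Uad c = {adjc c y | y. l2 y}"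

lemma inner_zero_left[simp]: "l2_inner (\<lambda>_. 0) y = 0" unfolding l2_inner_def by simp

lemma subsp_Uad: assumes c: "hsf c" shows "subsp (Uad c)"
  unfolding subsp_def Uad_def
proof (intro conjI ballI allI)
  show "\<And>x. x \<in> {adjc c y |y. l2 y} \<Longrightarrow> l2 x" using adjc_l2[OF c] by auto
  show "(\<lambda>_. 0) \<in> {adjc c y |y. l2 y}" by (intro CollectI exI[of _ "\<lambda>_. 0"]) (auto simp: adjc_def)
next
  fix x y assume "x \<in> {adjc c y |y. l2 y}" "y \<in> {adjc c y |y. l2 y}"
  then obtain x' y' where "l2 x'" "l2 y'" "x = adjc c x'" "y = adjc c y'" by auto
  then show "(\<lambda>i. x i + y i) \<in> {adjc c y |y. l2 y}"
    by (intro CollectI exI[of _ "\<lambda>i. x' i + y' i"])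
       (auto simp: adjc_def inner_add_left hsf_l2[OF c] l2_add)
next
  fix a x assume "x \<in> {adjc c y |y. l2 y}"
  then obtain x' where "l2 x'" "x = adjc c x'" by auto
  then show "(\<lambda>i. a * x i) \<in> {adjc c y |y. l2 y}"
    by (intro CollectI exI[of _ "\<lambda>i. a * x' i"]) (auto simp: adjc_def inner_scale_left l2_scale)
qed

lemma synth_diff:
  assumes "hsf c" "l2 x" "l2 y"
  shows "synth c (\<lambda>k. x k - y k) = (\<lambda>i. synth c x i - synth c y i)"
  using synth_add[OF assms(1,2) l2_scale[OF assms(3), of "-1"]] synth_scale[of c "-1" y] by simp

lemma Uad_synth_zero:
  assumes c: "hsf c" and u: "u \<in> Uad c" and z: "synth c u = (\<lambda>_. 0)"
  shows "u = (\<lambda>_. 0)"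
proof -
  obtain y where y: "l2 y" "u = adjc c y" using u unfolding Uad_def by auto
  have lu: "l2 u" using adjc_l2[OF c y(1)] y(2) by simp
  have "complex_of_real (nsq u) = l2_inner u u" by (simp add: inner_self)
  also have "\<dots> = l2_inner y (synth c u)" using adjoint_identity[OF c y(1) lu] y(2) by simp
  also have "\<dots> = 0" using z by (simp add: l2_inner_def)
  finally show ?thesis using nsq_eq_0[OF lu] by simp
qed

lemma rank_dimle:
  assumes c: "hsf c" and r: "op_rank (gram c) = enat n"
  shows "dimle (Uad c) n"
  unfolding dimle_def
proof (intro allI impI)
  fix S assume SU: "S \<subseteq> Uad c" and li: "lin_indep S"
  have fS: "finite S" using li unfolding lin_indep_def by blast
  have lS: "\<And>s. s \<in> S \<Longrightarrow> l2 s" using SU subsp_Uad[OF c] unfolding subsp_def by blast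
  have inj: "inj_on (synth c) S"
  proof
    fix s1 s2 assume s: "s1 \<in> S" "s2 \<in> S" "synth c s1 = synth c s2"
    have "(\<lambda>k. s1 k - s2 k) \<in> Uad c" using subsp_diff[OF subsp_Uad[OF c]] s SU by blast
    moreover have "synth c (\<lambda>k. s1 k - s2 k) = (\<lambda>_. 0)"
      using synth_diff[OF c lS[OF s(1)] lS[OF s(2)]] s(3) by simp
    ultimately have "(\<lambda>k. s1 k - s2 k) = (\<lambda>_. 0)" by (rule Uad_synth_zero[OF c])
    then show "s1 = s2" by (auto simp: fun_eq_iff)
  qed
  define S' where "S' = synth c ` S"
  have li': "lin_indep S'"
    unfolding lin_indep_def
  proof (intro conjI allI impI ballI)
    show "finite S'" unfolding S'_def using fS by simp
    fix d s' assume h: "(\<lambda>i. \<Sum>s\<in>S'. d s * s i) = (\<lambda>i. 0)" and s': "s' \<in> S'"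
    have "(\<lambda>i. \<Sum>s\<in>S. d (synth c s) * synth c s i) = (\<lambda>i. 0)"
      using h unfolding S'_def by (simp add: sum.reindex[OF inj])
    then have "synth c (\<lambda>k. \<Sum>s\<in>S. d (synth c s) * s k) = (\<lambda>_. 0)"
      by (subst synth_sum[OF fS lS c]) auto
    moreover have "(\<lambda>k. \<Sum>s\<in>S. d (synth c s) * s k) \<in> Uad c"
      by (rule subsp_sum[OF subsp_Uad[OF c] fS]) (use SU in auto)
    ultimately have "(\<lambda>k. \<Sum>s\<in>S. d (synth c s) * s k) = (\<lambda>_. 0)" by (intro Uad_synth_zero[OF c])
    then have "\<forall>s\<in>S. d (synth c s) = 0"
      using li[unfolded lin_indep_def, THEN conjunct2, rule_format, of "\<lambda>s. d (synth c s)"] by simp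
    then show "d s' = 0" using s' unfolding S'_def by auto
  qed
  have sub: "S' \<subseteq> l2_closure {gram c x |x. l2 x}"
  proof
    fix s' assume "s' \<in> S'"
    then obtain s where s: "s \<in> S" "s' = synth c s" unfolding S'_def by auto
    obtain y where y: "l2 y" "s = adjc c y" using s(1) SU unfolding Uad_def by auto
    have e: "s' = gram c y" unfolding gram_def using s y by simp
    have l: "l2 s'" using synth_l2(1)[OF c lS[OF s(1)]] s(2) by simp
    show "s' \<in> l2_closure {gram c x |x. l2 x}"
      unfolding l2_closure_def
    proof (intro CollectI conjI allI impI l)
      fix e' :: real assume "e' > 0"
      then show "\<exists>y\<in>{gram c x |x. l2 x}. l2_norm (\<lambda>i. s' i - y i) < e'"
        using e y(1) by (intro bexI[of _ s']) (auto simp: l2_norm_nsq nsq_def)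
    qed
  qed
  have "enat (card S') \<le> op_rank (gram c)"
    unfolding op_rank_def by (rule Sup_upper) (use sub li' in blast)
  then have "card S' \<le> n" using r by simp
  then show "card S \<le> n" unfolding S'_def using card_image[OF inj] by simp
qed

lemma l2_pair_form:
  assumes "l2 w" shows "(\<lambda>(i, j). (cmod (w (i, j)))^2) summable_on UNIV \<times> UNIV"
  using assms unfolding l2_def by (simp add: case_prod_beta')

lemma rows_l2: assumes "l2 w" shows "l2 (\<lambda>j. w (i, j))"
  unfolding l2_def
  using summable_on_SigmaD1[of "\<lambda>i j. (cmod (w (i, j)))^2" UNIV "\<lambda>_. UNIV" i] l2_pair_form[OF assms]
  by simp

lemma rows_summable: assumes "l2 w" shows "(\<lambda>i. nsq (\<lambda>j. w (i, j))) summable_on UNIV"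
  unfolding nsq_def
  using summable_on_Sigma_banach[of "\<lambda>i j. (cmod (w (i, j)))^2" UNIV "\<lambda>_. UNIV"] l2_pair_form[OF assms]
  by simp

definition wswap :: "('i \<times> 'j \<Rightarrow> complex) \<Rightarrow> 'j \<times> 'i \<Rightarrow> complex" where
  "wswap w = (\<lambda>(j, i). w (i, j))"

lemma l2_wswap: assumes "l2 w" shows "l2 (wswap w)"
proof -
  have "(\<lambda>(i, j). (cmod (w (i, j)))^2) summable_on UNIV \<times> UNIV" by (rule l2_pair_form[OF assms])
  then have "(\<lambda>(j, i). (cmod (w (i, j)))^2) summable_on UNIV \<times> UNIV"
    using summable_on_swap[of "\<lambda>(i, j). (cmod (w (i, j)))^2" UNIV UNIV] by simp
  then show ?thesis unfolding l2_def wswap_def by (simp add: case_prod_beta')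
qed

lemma infsum_pair_swap:
  fixes f :: "'a \<times> 'b \<Rightarrow> complex"
  assumes "f summable_on UNIV"
  shows "infsum (\<lambda>(y, x). f (x, y)) UNIV = infsum f UNIV"
proof -
  have "(f has_sum infsum f UNIV) (UNIV \<times> UNIV)" using assms by (simp add: summable_iff_has_sum_infsum)
  then have "((\<lambda>(y, x). f (x, y)) has_sum infsum f UNIV) (UNIV \<times> UNIV)"
    using has_sum_swap[where f=f and S="infsum f UNIV" and A=UNIV and B=UNIV] by simp
  then show ?thesis by (simp add: infsumI)
qed

context
  fixes a :: "'k \<Rightarrow> 'i \<Rightarrow> complex" and b :: "'k \<Rightarrow> 'j \<Rightarrow> complex"
  assumes ha: "hsf a" and hb: "hsf b"
begin

lemma M_col_in_Uad:
  assumes w: "l2 w" shows "(\<lambda>k. Mx a b w (k, l)) \<in> Uad a"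
proof -
  define y where "y = (\<lambda>i. l2_inner (\<lambda>j. w (i, j)) (b l))"
  have ly: "l2 y"
    unfolding l2_def y_def
  proof (rule summable_on_comparison_test)
    show "(\<lambda>i. nsq (\<lambda>j. w (i, j)) * nsq (b l)) summable_on UNIV"
      by (rule summable_on_cmult_left[OF rows_summable[OF w]])
    fix i
    show "(cmod (l2_inner (\<lambda>j. w (i, j)) (b l)))^2 \<le> nsq (\<lambda>j. w (i, j)) * nsq (b l)"
      by (rule inner_bound2[OF rows_l2[OF w] hsf_l2[OF hb]])
  qed auto
  have "Mx a b w (k, l) = adjc a y k" for k
  proof -
    have ps: "(\<lambda>(i, j). w (i, j) * (cnj (b l j) * cnj (a k i))) summable_on Sigma UNIV (\<lambda>_. UNIV)"
      using inner_summable[OF w phi_l2[OF ha hb, of "(k, l)"]]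
      by (simp add: phi_def case_prod_beta' mult_ac)
    have "Mx a b w (k, l) = infsum (\<lambda>(i, j). w (i, j) * (cnj (b l j) * cnj (a k i))) UNIV"
      unfolding Mx_def l2_inner_def phi_def by (simp add: case_prod_beta' mult_ac)
    also have "\<dots> = infsum (\<lambda>i. infsum (\<lambda>j. w (i, j) * (cnj (b l j) * cnj (a k i))) UNIV) UNIV"
      using infsum_Sigma'_banach[OF ps] by simp
    also have "\<dots> = infsum (\<lambda>i. y i * cnj (a k i)) UNIV"
      unfolding y_def l2_inner_def by (simp add: infsum_cmult_right' mult_ac)
    also have "\<dots> = adjc a y k" unfolding adjc_def l2_inner_def ..
    finally show ?thesis .
  qed
  then show ?thesis unfolding Uad_def using ly by blast
qed

lemma Mx_swap: "l2 w \<Longrightarrow> Mx b a (wswap w) (l, k) = Mx a b w (k, l)"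
proof -
  assume w: "l2 w"
  have "Mx b a (wswap w) (l, k) = infsum (\<lambda>(j, i). w (i, j) * cnj (a k i * b l j)) UNIV"
    unfolding Mx_def l2_inner_def phi_def wswap_def by (simp add: case_prod_beta' mult_ac)
  also have "\<dots> = infsum (\<lambda>p. w p * cnj (phi a b (k, l) p)) UNIV"
    by (subst infsum_pair_swap[symmetric, OF inner_summable[OF w phi_l2[OF ha hb]]])
       (simp add: phi_def case_prod_beta')
  also have "\<dots> = Mx a b w (k, l)" unfolding Mx_def l2_inner_def ..
  finally show ?thesis .
qed

lemma Fw_iter:
  assumes w: "l2 w"
  shows "(\<lambda>l. nsq (\<lambda>k. Mx a b w (k, l))) summable_on UNIV"
    and "infsum (\<lambda>l. nsq (\<lambda>k. Mx a b w (k, l))) UNIV = Fw a b w"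
    and "(\<lambda>k. nsq (\<lambda>l. Mx a b w (k, l))) summable_on UNIV"
    and "infsum (\<lambda>k. nsq (\<lambda>l. Mx a b w (k, l))) UNIV = Fw a b w"
proof -
  have s: "(\<lambda>(k, l). (cmod (Mx a b w (k, l)))^2) summable_on UNIV \<times> UNIV"
    using M_sq_summable[OF ha hb w] by (simp add: case_prod_beta')
  have s': "(\<lambda>(l, k). (cmod (Mx a b w (k, l)))^2) summable_on UNIV \<times> UNIV"
    using summable_on_swap[of "\<lambda>(k, l). (cmod (Mx a b w (k, l)))^2" UNIV UNIV] s by simp
  show "(\<lambda>l. nsq (\<lambda>k. Mx a b w (k, l))) summable_on UNIV"
    unfolding nsq_def using summable_on_Sigma_banach[OF s'[unfolded UNIV_Times_UNIV[symmetric]]] by simp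
  show "(\<lambda>k. nsq (\<lambda>l. Mx a b w (k, l))) summable_on UNIV"
    unfolding nsq_def using summable_on_Sigma_banach[OF s] by simp
  have e1: "infsum (\<lambda>k. nsq (\<lambda>l. Mx a b w (k, l))) UNIV = Fw a b w"
    unfolding nsq_def Fw_def[OF ha hb] using infsum_Sigma'_banach[OF s] by (simp add: case_prod_beta')
  then show "infsum (\<lambda>k. nsq (\<lambda>l. Mx a b w (k, l))) UNIV = Fw a b w" .
  have "infsum (\<lambda>l. nsq (\<lambda>k. Mx a b w (k, l))) UNIV = infsum (\<lambda>k. nsq (\<lambda>l. Mx a b w (k, l))) UNIV"
    unfolding nsq_def by (rule infsum_swap_banach[symmetric]) (use s in simp)
  then show "infsum (\<lambda>l. nsq (\<lambda>k. Mx a b w (k, l))) UNIV = Fw a b w" using e1 by simp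
qed

end

lemma M_row_in_Uad:
  assumes ha: "hsf a" and hb: "hsf b" and w: "l2 w"
  shows "(\<lambda>l. Mx a b w (k, l)) \<in> Uad b"
proof -
  have "(\<lambda>l. Mx b a (wswap w) (l, k)) \<in> Uad b"
    by (rule M_col_in_Uad[OF hb ha l2_wswap[OF w]])
  then show ?thesis using Mx_swap[OF ha hb w] by simp
qed

lemma key_bound:
  assumes ha: "hsf a" and hb: "hsf b" and w: "l2 w"
    and d: "dimle (Uad a) n \<or> dimle (Uad b) n"
  shows "(cmod (infsum (\<lambda>k. Mx a b w (k, k)) UNIV))^2 \<le> real n * Fw a b w"
  using d
proof
  assume "dimle (Uad a) n"
  from trace_bound[OF subsp_Uad[OF ha] this, of "\<lambda>l k. Mx a b w (k, l)"]
  show ?thesis using M_col_in_Uad[OF ha hb w] Fw_iter(1,2)[OF ha hb w] by simp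
next
  assume "dimle (Uad b) n"
  from trace_bound[OF subsp_Uad[OF hb] this, of "\<lambda>k l. Mx a b w (k, l)"]
  show ?thesis using M_row_in_Uad[OF ha hb w] Fw_iter(3,4)[OF ha hb w] by simp
qed

lemma tensor_eq:
  fixes A :: "('k \<Rightarrow> complex) \<Rightarrow> ('i \<Rightarrow> complex)" and B :: "('k \<Rightarrow> complex) \<Rightarrow> ('j \<Rightarrow> complex)"
  assumes A: "hs_op A" and B: "hs_op_conj B"
  shows "tensor_op (AAs A) (BBs B) = Xw (\<lambda>k. A (ket k)) (\<lambda>k. B (ket k))"
proof (intro ext)
  fix w and p :: "'i \<times> 'j"
  obtain i j where p: "p = (i, j)" by (cases p)
  have ha: "hsf (\<lambda>k. A (ket k))" by (rule hs_hsf[OF A])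
  have hb: "hsf (\<lambda>k. B (ket k))" by (rule hs_conj_hsf[OF B])
  have eA: "AAs A (ket i') i = infsum (\<lambda>k. cnj (A (ket k) i') * A (ket k) i) UNIV" for i' i
    using AAs_gram[OF A l2_ket] gram_ket_coord[OF ha] by simp
  have eB: "BBs B (ket j') j = infsum (\<lambda>k. cnj (B (ket k) j') * B (ket k) j) UNIV" for j' j
    using BBs_gram[OF B l2_ket] gram_ket_coord[OF hb] by simp
  show "tensor_op (AAs A) (BBs B) w p = Xw (\<lambda>k. A (ket k)) (\<lambda>k. B (ket k)) w p"
    unfolding tensor_op_def Xw_def[OF ha hb] p by (simp add: eA eB)
qed

lemma vec_eq:
  fixes A :: "('k \<Rightarrow> complex) \<Rightarrow> ('i \<Rightarrow> complex)" and B :: "('k \<Rightarrow> complex) \<Rightarrow> ('j \<Rightarrow> complex)"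
  assumes A: "hs_op A" and B: "hs_op_conj B"
  shows "vec (B \<circ> transp A) = vv (\<lambda>k. A (ket k)) (\<lambda>k. B (ket k))"
proof
  fix p :: "'i \<times> 'j"
  obtain i j where p: "p = (i, j)" by (cases p)
  show "vec (B \<circ> transp A) p = vv (\<lambda>k. A (ket k)) (\<lambda>k. B (ket k)) p"
    unfolding p vec_formula[OF A B] vv_def[OF hs_hsf[OF A] hs_conj_hsf[OF B]] by simp
qed

context
  fixes a :: "'k \<Rightarrow> 'i \<Rightarrow> complex" and b :: "'k \<Rightarrow> 'j \<Rightarrow> complex"
  assumes ha: "hsf a" and hb: "hsf b"
begin

lemma theta_form:
  assumes w: "l2 w"
  shows "(\<lambda>p. scale_op r (theta (vv a b) (vv a b)) w p * cnj (w p)) summable_on UNIV"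
    and "l2_inner (scale_op r (theta (vv a b) (vv a b)) w) w
          = complex_of_real (r * (cmod (infsum (\<lambda>k. Mx a b w (k, k)) UNIV))^2)"
proof -
  let ?v = "vv a b"
  have s0: "(\<lambda>p. w p * cnj (?v p)) summable_on UNIV" by (rule vv_form(1)[OF ha hb w])
  have s1: "(\<lambda>p. ?v p * cnj (w p)) summable_on UNIV"
    using s0 summable_on_cnj_iff[of "\<lambda>p. w p * cnj (?v p)"] by (simp add: mult.commute)
  have e: "(\<lambda>p. scale_op r (theta ?v ?v) w p * cnj (w p)) = (\<lambda>p. (complex_of_real r * l2_inner w ?v) * (?v p * cnj (w p)))"
    unfolding scale_op_def theta_def by (simp add: mult_ac)
  show "(\<lambda>p. scale_op r (theta ?v ?v) w p * cnj (w p)) summable_on UNIV"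
    unfolding e by (rule summable_on_cmult_right[OF s1])
  have c: "infsum (\<lambda>p. ?v p * cnj (w p)) UNIV = cnj (l2_inner w ?v)"
    unfolding l2_inner_def by (subst infsum_cnj[symmetric]) (simp add: mult.commute)
  have "l2_inner (scale_op r (theta ?v ?v) w) w = complex_of_real r * l2_inner w ?v * cnj (l2_inner w ?v)"
    unfolding l2_inner_def[of "scale_op r (theta ?v ?v) w"] e infsum_cmult_right' c by simp
  also have "\<dots> = complex_of_real r * complex_of_real ((cmod (l2_inner w ?v))^2)"
    by (simp only: complex_norm_square mult.assoc)
  finally show "l2_inner (scale_op r (theta ?v ?v) w) w = complex_of_real (r * (cmod (infsum (\<lambda>k. Mx a b w (k, k)) UNIV))^2)"
    using vv_form(2)[OF ha hb w] by simp
qed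

lemma loewner_form:
  assumes w: "l2 w"
  shows "l2_inner (\<lambda>p. Xw a b w p - scale_op r (theta (vv a b) (vv a b)) w p) w
          = complex_of_real (Fw a b w - r * (cmod (infsum (\<lambda>k. Mx a b w (k, k)) UNIV))^2)"
proof -
  have "l2_inner (\<lambda>p. Xw a b w p - scale_op r (theta (vv a b) (vv a b)) w p) w
        = infsum (\<lambda>p. Xw a b w p * cnj (w p) - scale_op r (theta (vv a b) (vv a b)) w p * cnj (w p)) UNIV"
    unfolding l2_inner_def by (simp add: left_diff_distrib)
  also have "\<dots> = l2_inner (Xw a b w) w - l2_inner (scale_op r (theta (vv a b) (vv a b)) w) w"
    unfolding l2_inner_def
    by (rule infsum_diff'[OF Xw_form(1)[OF ha hb w] theta_form(1)[OF w]])
  finally show ?thesis using Xw_form(2)[OF ha hb w] theta_form(2)[OF w] by simp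
qed

lemma zero_form:
  assumes w: "l2 w"
  shows "l2_inner (\<lambda>p. scale_op r (theta (vv a b) (vv a b)) w p - zero_op w p) w
          = complex_of_real (r * (cmod (infsum (\<lambda>k. Mx a b w (k, k)) UNIV))^2)"
  using theta_form(2)[OF w] by (simp add: zero_op_def)

end

lemma inv_enat_nonneg: "0 \<le> inv_enat m"
  unfolding inv_enat_def by (cases m) auto

lemma part1_ineq:
  assumes ha: "hsf a" and hb: "hsf b" and w: "l2 w"
  shows "inv_enat (min (op_rank (gram a)) (op_rank (gram b))) * (cmod (infsum (\<lambda>k. Mx a b w (k, k)) UNIV))^2
         \<le> Fw a b w"
proof (cases "min (op_rank (gram a)) (op_rank (gram b))")
  case (enat n)
  then have "op_rank (gram a) = enat n \<or> op_rank (gram b) = enat n"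
    by (metis min_def)
  then have "dimle (Uad a) n \<or> dimle (Uad b) n" using rank_dimle[OF ha] rank_dimle[OF hb] by blast
  then have kb: "(cmod (infsum (\<lambda>k. Mx a b w (k, k)) UNIV))^2 \<le> real n * Fw a b w"
    by (rule key_bound[OF ha hb w])
  show ?thesis
  proof (cases "n = 0")
    case True then show ?thesis using enat Fw_nonneg[OF ha hb] by (simp add: inv_enat_def)
  next
    case False
    then show ?thesis using enat kb by (simp add: inv_enat_def field_simps)
  qed
next
  case infinity
  then show ?thesis using Fw_nonneg[OF ha hb] by (simp add: inv_enat_def)
qed

lemma part1:
  fixes A :: "('k \<Rightarrow> complex) \<Rightarrow> ('i \<Rightarrow> complex)" and B :: "('k \<Rightarrow> complex) \<Rightarrow> ('j \<Rightarrow> complex)"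
  assumes A: "hs_op A" and B: "hs_op_conj B"
  shows "loewner_ge (tensor_op (AAs A) (BBs B))
                   (scale_op (inv_enat (min_rank A B)) (theta (vec (B \<circ> transp A)) (vec (B \<circ> transp A))))
      \<and> loewner_ge (scale_op (inv_enat (min_rank A B)) (theta (vec (B \<circ> transp A)) (vec (B \<circ> transp A))))
                   zero_op"
proof -
  define a where "a = (\<lambda>k. A (ket k))"
  define b where "b = (\<lambda>k. B (ket k))"
  have ha: "hsf a" unfolding a_def by (rule hs_hsf[OF A])
  have hb: "hsf b" unfolding b_def by (rule hs_conj_hsf[OF B])
  have mr: "min_rank A B = min (op_rank (gram a)) (op_rank (gram b))"
    unfolding min_rank_def a_def b_def rank_A[OF A] rank_B[OF B] ..
  have te: "tensor_op (AAs A) (BBs B) = Xw a b" unfolding a_def b_def by (rule tensor_eq[OF A B])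
  have ve: "vec (B \<circ> transp A) = vv a b" unfolding a_def b_def by (rule vec_eq[OF A B])
  define r where "r = inv_enat (min_rank A B)"
  have r0: "0 \<le> r" unfolding r_def by (rule inv_enat_nonneg)
  show ?thesis
    unfolding te ve r_def[symmetric] loewner_ge_def
  proof (intro conjI allI impI)
    fix w :: "'i \<times> 'j \<Rightarrow> complex" assume w: "l2 w"
    have "r * (cmod (infsum (\<lambda>k. Mx a b w (k, k)) UNIV))^2 \<le> Fw a b w"
      unfolding r_def mr by (rule part1_ineq[OF ha hb w])
    then show "0 \<le> l2_inner (\<lambda>p. Xw a b w p - scale_op r (theta (vv a b) (vv a b)) w p) w"
      unfolding loewner_form[OF ha hb w] by (simp add: less_eq_complex_def)
    show "0 \<le> l2_inner (\<lambda>p. scale_op r (theta (vv a b) (vv a b)) w p - zero_op w p) w"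
      unfolding zero_form[OF ha hb w] using r0 by (simp add: less_eq_complex_def)
  qed
qed

definition dfam :: "nat set \<Rightarrow> (nat \<Rightarrow> 'k) \<Rightarrow> (nat \<Rightarrow> 'i) \<Rightarrow> (nat \<Rightarrow> real) \<Rightarrow> 'k \<Rightarrow> 'i \<Rightarrow> complex" where
  "dfam D g h \<sigma> k = (if k \<in> g ` D then (\<lambda>i. complex_of_real (\<sigma> (the_inv_into D g k)) * ket (h (the_inv_into D g k)) i)
                      else (\<lambda>_. 0))"

lemma gram_scale: "hsf c \<Longrightarrow> l2 y \<Longrightarrow> gram c (\<lambda>i. \<alpha> * y i) = (\<lambda>i. \<alpha> * gram c y i)"
  unfolding gram_def adjc_def by (simp add: inner_scale_left synth_scale[of c \<alpha>, symmetric])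

lemma gram_l2: "hsf c \<Longrightarrow> y \<in> {gram c x |x. l2 x} \<Longrightarrow> l2 y"
  unfolding gram_def using synth_l2(1) adjc_l2 by blast

lemma op_rank_ge:
  assumes "S \<subseteq> {T x |x. l2 x}" "\<And>s. s \<in> S \<Longrightarrow> l2 s" "lin_indep S"
  shows "enat (card S) \<le> op_rank T"
  unfolding op_rank_def
proof (rule Sup_upper, intro CollectI exI conjI)
  show "S \<subseteq> l2_closure {T x |x. l2 x}"
  proof
    fix s assume s: "s \<in> S"
    have sT: "s \<in> {T x |x. l2 x}" using assms(1) s by blast
    have z: "l2_norm (\<lambda>i. s i - s i) = 0" by (simp add: l2_norm_nsq nsq_def)
    show "s \<in> l2_closure {T x |x. l2 x}"
      unfolding l2_closure_def
    proof (intro CollectI conjI allI impI)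
      show "l2 s" by (rule assms(2)[OF s])
      fix e :: real assume "e > 0"
      then show "\<exists>y\<in>{T x |x. l2 x}. l2_norm (\<lambda>i. s i - y i) < e" using sT z by (intro bexI[of _ s]) auto
    qed
  qed
qed (use assms in auto)

lemma enat_all_ge_infty: assumes "\<And>N. enat N \<le> x" shows "x = \<infinity>"
proof (cases x)
  case (enat m) with assms[of "Suc m"] show ?thesis by simp
qed simp

context
  fixes D :: "nat set" and g :: "nat \<Rightarrow> 'k" and h :: "nat \<Rightarrow> 'i" and \<sigma> :: "nat \<Rightarrow> real"
  assumes ig: "inj_on g D" and ih: "inj_on h D" and sp: "\<And>t. t \<in> D \<Longrightarrow> \<sigma> t > 0"
    and ss: "(\<lambda>t. (\<sigma> t)^2) summable_on D"
begin

lemma dfam_g: "t \<in> D \<Longrightarrow> dfam D g h \<sigma> (g t) = (\<lambda>i. complex_of_real (\<sigma> t) * ket (h t) i)"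
  unfolding dfam_def using the_inv_into_f_f[OF ig] by auto

lemma dfam_out: "k \<notin> g ` D \<Longrightarrow> dfam D g h \<sigma> k = (\<lambda>_. 0)"
  unfolding dfam_def by auto

lemma dfam_at: "t \<in> D \<Longrightarrow> dfam D g h \<sigma> k (h t) = (if k = g t then complex_of_real (\<sigma> t) else 0)"
proof (cases "k \<in> g ` D")
  case True
  then obtain s where s: "s \<in> D" "k = g s" by auto
  assume t: "t \<in> D"
  have "h s = h t \<longleftrightarrow> s = t" using ih s(1) t by (auto dest: inj_onD)
  moreover have "g s = g t \<longleftrightarrow> s = t" using ig s(1) t by (auto dest: inj_onD)
  ultimately show ?thesis using s dfam_g[OF s(1)] by (auto simp: ket_def)
next
  case False
  assume t: "t \<in> D"
  then show ?thesis using False dfam_out by auto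
qed

lemma dfam_support: "i \<notin> h ` D \<Longrightarrow> dfam D g h \<sigma> k i = 0"
  unfolding dfam_def by (auto simp: ket_def dest!: the_inv_into_into[OF ig, of k D, simplified])

lemma dfam_nsq: "nsq (dfam D g h \<sigma> k) = (if k \<in> g ` D then (\<sigma> (the_inv_into D g k))^2 else 0)"
  unfolding dfam_def by (auto simp: nsq_scale nsq_def[of "\<lambda>_. 0"])

lemma dfam_hsf: "hsf (dfam D g h \<sigma>)"
  unfolding hsf_def
proof (intro conjI allI)
  fix k show "l2 (dfam D g h \<sigma> k)" unfolding dfam_def by (auto intro: l2_scale)
next
  have "(\<lambda>k. nsq (dfam D g h \<sigma> k)) summable_on g ` D"
  proof -
    have "((\<lambda>k. nsq (dfam D g h \<sigma> k)) \<circ> g) summable_on D"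
      using ss by (rule summable_on_cong[THEN iffD1, rotated])
                  (auto simp: dfam_nsq the_inv_into_f_f[OF ig])
    then show ?thesis using summable_on_reindex[OF ig] by blast
  qed
  then show "(\<lambda>k. nsq (dfam D g h \<sigma> k)) summable_on UNIV"
    by (rule summable_on_cong_neutral[THEN iffD1, rotated -1]) (auto simp: dfam_nsq)
qed

lemma gram_dfam_ket:
  assumes t: "t \<in> D"
  shows "gram (dfam D g h \<sigma>) (ket (h t)) = (\<lambda>i. complex_of_real ((\<sigma> t)^2) * ket (h t) i)"
proof
  fix i
  have a: "adjc (dfam D g h \<sigma>) (ket (h t)) k = (if k = g t then complex_of_real (\<sigma> t) else 0)" for k
    unfolding adjc_def inner_ket_left dfam_at[OF t] by simp
  have "gram (dfam D g h \<sigma>) (ket (h t)) i = infsum (\<lambda>k. adjc (dfam D g h \<sigma>) (ket (h t)) k * dfam D g h \<sigma> k i) {g t}"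
    unfolding gram_def synth_def by (rule infsum_cong_neutral) (auto simp: a)
  also have "\<dots> = complex_of_real (\<sigma> t) * (complex_of_real (\<sigma> t) * ket (h t) i)"
    by (simp add: a dfam_g[OF t])
  finally show "gram (dfam D g h \<sigma>) (ket (h t)) i = complex_of_real ((\<sigma> t)^2) * ket (h t) i"
    by (simp add: power2_eq_square)
qed

lemma gram_dfam_support:
  assumes "i \<notin> h ` D" shows "gram (dfam D g h \<sigma>) y i = 0"
  unfolding gram_def synth_def using dfam_support[OF assms] by simp

lemma rank_dfam_lower:
  assumes E: "finite E" "E \<subseteq> D"
  shows "enat (card E) \<le> op_rank (gram (dfam D g h \<sigma>))"
proof -
  define S where "S = (\<lambda>t. ket (h t)) ` E"
  have inj: "inj_on (\<lambda>t. ket (h t)) E"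
  proof
    fix s t assume st: "s \<in> E" "t \<in> E" "ket (h s) = ket (h t)"
    then have "ket (h s) (h s) = ket (h t) (h s)" by simp
    then have "h s = h t" by (auto simp: ket_def split: if_splits)
    then show "s = t" using ih st E(2) by (auto dest: inj_onD)
  qed
  have ke: "ket x = ket y \<longleftrightarrow> x = y" for x y :: 'i
    by (metis ket_def one_neq_zero)
  have orth: "orthonormal S"
    unfolding orthonormal_def S_def by (auto simp: inner_ket_right ke) (auto simp: ket_def)
  have li: "lin_indep S" by (rule orthonormal_lin_indep[OF orth]) (simp add: S_def E(1))
  have sub: "S \<subseteq> {gram (dfam D g h \<sigma>) x |x. l2 x}"
  proof
    fix s assume "s \<in> S"
    then obtain t where t: "t \<in> E" "s = ket (h t)" unfolding S_def by auto
    have tD: "t \<in> D" using t(1) E(2) by auto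
    have "gram (dfam D g h \<sigma>) (\<lambda>i. complex_of_real (1 / (\<sigma> t)^2) * ket (h t) i) = s"
      using sp[OF tD] unfolding gram_scale[OF dfam_hsf l2_ket] gram_dfam_ket[OF tD] t(2)
      by (auto simp: fun_eq_iff)
    moreover have "l2 (\<lambda>i. complex_of_real (1 / (\<sigma> t)^2) * ket (h t) i)" by (intro l2_scale l2_ket)
    ultimately show "s \<in> {gram (dfam D g h \<sigma>) x |x. l2 x}" by blast
  qed
  have "enat (card S) \<le> op_rank (gram (dfam D g h \<sigma>))"
    by (rule op_rank_ge[OF sub _ li]) (auto simp: S_def)
  then show ?thesis unfolding S_def using card_image[OF inj] by simp
qed

lemma closure_support:
  assumes "x \<in> l2_closure V" "\<And>y i. y \<in> V \<Longrightarrow> i \<notin> H \<Longrightarrow> y i = 0" "i \<notin> H"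
    and lV: "\<And>y. y \<in> V \<Longrightarrow> l2 y"
  shows "x i = 0"
proof (rule ccontr)
  assume ne: "x i \<noteq> 0"
  have ap: "\<forall>e>0. \<exists>y\<in>V. l2_norm (\<lambda>i. x i - y i) < e" using assms(1) unfolding l2_closure_def by blast
  have pos: "cmod (x i) > 0" using ne by simp
  obtain y where y: "y \<in> V" "l2_norm (\<lambda>j. x j - y j) < cmod (x i)"
    using ap[rule_format, OF pos] by blast
  have ly: "l2 y" using lV[OF y(1)] .
  have "cmod (x i - y i) \<le> sqrt (nsq (\<lambda>j. x j - y j))"
    by (rule l2_coord_le'[OF l2_diff]) (use assms(1) ly in \<open>auto simp: l2_closure_def\<close>)
  moreover have "y i = 0" using assms(2)[OF y(1) assms(3)] .
  ultimately show False using y(2) by (simp add: l2_norm_nsq)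
qed

lemma rank_dfam_upper:
  assumes D: "finite D"
  shows "op_rank (gram (dfam D g h \<sigma>)) \<le> enat (card D)"
  unfolding op_rank_def
proof (rule Sup_least, clarify)
  fix S assume S: "S \<subseteq> l2_closure {gram (dfam D g h \<sigma>) x |x. l2 x}" "lin_indep S"
  have "card S \<le> card (h ` D)"
  proof (rule lin_indep_support_card[OF S(2)])
    show "finite (h ` D)" using D by simp
    fix x i assume "x \<in> S" "i \<notin> h ` D"
    then show "x i = 0"
      using closure_support[of x _ "h ` D" i] S(1) gram_dfam_support gram_l2[OF dfam_hsf] by blast
  qed
  also have "\<dots> = card D" using card_image[OF ih] .
  finally show "enat (card S) \<le> enat (card D)" by simp
qed

lemma rank_dfam_fin: "finite D \<Longrightarrow> op_rank (gram (dfam D g h \<sigma>)) = enat (card D)"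
  using rank_dfam_upper rank_dfam_lower[of D] by (simp add: antisym)

lemma rank_dfam_inf:
  assumes "infinite D" shows "op_rank (gram (dfam D g h \<sigma>)) = \<infinity>"
proof (rule enat_all_ge_infty)
  fix N
  obtain E where "E \<subseteq> D" "finite E" "card E = N" using infinite_arbitrarily_large[OF assms] by blast
  then show "enat N \<le> op_rank (gram (dfam D g h \<sigma>))" using rank_dfam_lower by blast
qed

end

definition opB :: "('k \<Rightarrow> 'j \<Rightarrow> complex) \<Rightarrow> ('k \<Rightarrow> complex) \<Rightarrow> 'j \<Rightarrow> complex" where
  "opB b x = synth b (\<lambda>k. cnj (x k))"

lemma opB_ket: "opB b (ket k) = b k"
  unfolding opB_def by (simp add: synth_ket)

lemma hs_opB: assumes hb: "hsf b" shows "hs_op_conj (opB b)"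
proof -
  have bo: "bounded_op (synth b)" by (rule bounded_op_synth[OF hb])
  obtain C where C: "\<And>x. l2 x \<Longrightarrow> sqrt (nsq (synth b x)) \<le> C * sqrt (nsq x)"
    using bop_bound[OF bo] by blast
  have "bounded_op_conj (opB b)"
    unfolding bounded_op_conj_def opB_def
  proof (intro conjI allI impI)
    fix x :: "'a \<Rightarrow> complex" assume "l2 x"
    then show "l2 (synth b (\<lambda>k. cnj (x k)))" using bop_l2[OF bo l2_cnj] by blast
  next
    fix x y :: "'a \<Rightarrow> complex" assume "l2 x" "l2 y"
    then show "synth b (\<lambda>k. cnj (x k + y k)) = (\<lambda>p. synth b (\<lambda>k. cnj (x k)) p + synth b (\<lambda>k. cnj (y k)) p)"
      using synth_add[OF hb l2_cnj l2_cnj] by simp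
  next
    fix c and x :: "'a \<Rightarrow> complex"
    show "synth b (\<lambda>k. cnj (cnj c * x k)) = (\<lambda>p. c * synth b (\<lambda>k. cnj (x k)) p)"
      using synth_scale[of b c "\<lambda>k. cnj (x k)"] by simp
  next
    show "\<exists>C. \<forall>x. l2 x \<longrightarrow> l2_norm (synth b (\<lambda>k. cnj (x k))) \<le> C * l2_norm x"
    proof (intro exI allI impI)
      fix x :: "'a \<Rightarrow> complex" assume "l2 x"
      show "l2_norm (synth b (\<lambda>k. cnj (x k))) \<le> C * l2_norm x"
        using C[OF l2_cnj[OF \<open>l2 x\<close>]] by (simp add: l2_norm_nsq)
    qed
  qed
  then show ?thesis
    unfolding hs_op_conj_def using hb by (simp add: opB_ket hsf_def l2_norm_nsq nsq_nonneg)
qed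

lemma nonzero_lin_indep: assumes "v \<noteq> (\<lambda>_. 0)" shows "lin_indep {v}"
  unfolding lin_indep_def
proof (intro conjI allI impI ballI)
  fix d s assume h: "(\<lambda>i. \<Sum>s\<in>{v}. d s * s i) = (\<lambda>i. 0)" and s: "s \<in> {v}"
  obtain i where i: "v i \<noteq> 0" using assms by (auto simp: fun_eq_iff)
  have "d v * v i = 0" using fun_cong[OF h, of i] by simp
  then show "d s = 0" using i s by simp
qed simp

lemma rank_ge1:
  assumes c: "hsf c" and nz: "c k0 \<noteq> (\<lambda>_. 0)"
  shows "enat 1 \<le> op_rank (gram c)"
proof -
  have lc: "l2 (c k0)" by (rule hsf_l2[OF c])
  have ne: "gram c (c k0) \<noteq> (\<lambda>_. 0)"
  proof
    assume g0: "gram c (c k0) = (\<lambda>_. 0)"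
    have "adjc c (c k0) \<in> Uad c" unfolding Uad_def using lc by blast
    moreover have "synth c (adjc c (c k0)) = (\<lambda>_. 0)" using g0 unfolding gram_def .
    ultimately have "adjc c (c k0) = (\<lambda>_. 0)" by (rule Uad_synth_zero[OF c])
    then have "l2_inner (c k0) (c k0) = 0" using fun_cong[of "adjc c (c k0)" "\<lambda>_. 0" k0] unfolding adjc_def by simp
    then have "nsq (c k0) = 0" by (simp add: inner_self)
    then show False using nsq_eq_0[OF lc] nz by simp
  qed
  have sub: "{gram c (c k0)} \<subseteq> {gram c x |x. l2 x}" using lc by blast
  have l: "\<And>s. s \<in> {gram c (c k0)} \<Longrightarrow> l2 s" using gram_l2[OF c] sub by blast
  have "enat (card {gram c (c k0)}) \<le> op_rank (gram c)"
    by (rule op_rank_ge[OF sub l nonzero_lin_indep[OF ne]])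
  then show ?thesis by simp
qed

lemma rank_has_big_set:
  assumes r: "enat n \<le> op_rank T" and n: "n \<ge> 1"
  shows "\<exists>S. S \<subseteq> l2_closure {T x |x. l2 x} \<and> lin_indep S \<and> n \<le> card S"
proof (rule ccontr)
  assume "\<not> ?thesis"
  then have "\<forall>S. S \<subseteq> l2_closure {T x |x. l2 x} \<and> lin_indep S \<longrightarrow> card S \<le> n - 1" by force
  then have "op_rank T \<le> enat (n - 1)" unfolding op_rank_def by (intro Sup_least) auto
  with r n show False by (cases "op_rank T") auto
qed

lemma synth_span:
  assumes "finite (UNIV :: 'k set)" "l2 x"
  shows "synth (c :: 'k \<Rightarrow> 'i \<Rightarrow> complex) x \<in> fvs.span (range c)"
proof -
  have "synth c x = (\<Sum>k\<in>UNIV. (\<lambda>i. x k * c k i))"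
    unfolding synth_def using assms(1) by (auto simp: fun_eq_iff sum_fun_apply)
  also have "\<dots> \<in> fvs.span (range c)"
    by (intro fvs.span_sum fvs.span_scale fvs.span_base) auto
  finally show ?thesis .
qed

lemma type_bounds:
  fixes c :: "'k \<Rightarrow> 'i \<Rightarrow> complex"
  assumes c: "hsf c" and r: "enat n \<le> op_rank (gram c)"
  shows "finite (UNIV :: 'i set) \<Longrightarrow> n \<le> card (UNIV :: 'i set)"
    and "finite (UNIV :: 'k set) \<Longrightarrow> n \<le> card (UNIV :: 'k set)"
proof -
  have ex: "\<exists>S. S \<subseteq> l2_closure {gram c x |x. l2 x} \<and> lin_indep S \<and> n \<le> card S" if "n \<ge> 1"
    by (rule rank_has_big_set[OF r that])
  show "n \<le> card (UNIV :: 'i set)" if fin: "finite (UNIV :: 'i set)"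
  proof (cases "n \<ge> 1")
    case True
    then obtain S :: "('i \<Rightarrow> complex) set" where S: "lin_indep S" "n \<le> card S" using ex by blast
    have "card S \<le> card (UNIV :: 'i set)" by (rule lin_indep_support_card[OF S(1) fin]) auto
    then show ?thesis using S(2) by simp
  qed simp
  show "n \<le> card (UNIV :: 'k set)" if fin: "finite (UNIV :: 'k set)"
  proof (cases "n \<ge> 1")
    case True
    then obtain S :: "('i \<Rightarrow> complex) set" where S: "S \<subseteq> l2_closure {gram c x |x. l2 x}" "lin_indep S" "n \<le> card S" using ex by blast
    define V where "V = {synth c x |x. l2 x}"
    have sV: "subsp V"
      unfolding subsp_def V_def
    proof (intro conjI ballI allI)
      show "\<And>y. y \<in> {synth c x |x. l2 x} \<Longrightarrow> l2 y" using synth_l2(1)[OF c] by blast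
      show "(\<lambda>_. 0) \<in> {synth c x |x. l2 x}"
        by (intro CollectI exI[of _ "\<lambda>_. 0"]) (auto simp: synth_def)
    next
      fix x y assume "x \<in> {synth c x |x. l2 x}" "y \<in> {synth c x |x. l2 x}"
      then obtain x' y' where "l2 x'" "l2 y'" "x = synth c x'" "y = synth c y'" by blast
      then show "(\<lambda>i. x i + y i) \<in> {synth c x |x. l2 x}"
        by (intro CollectI exI[of _ "\<lambda>k. x' k + y' k"]) (auto simp: synth_add[OF c] l2_add)
    next
      fix a x assume "x \<in> {synth c x |x. l2 x}"
      then obtain x' where "l2 x'" "x = synth c x'" by blast
      then show "(\<lambda>i. a * x i) \<in> {synth c x |x. l2 x}"
        by (intro CollectI exI[of _ "\<lambda>k. a * x' k"]) (auto simp: synth_scale l2_scale)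
    qed
    have dV: "dimle V (card (UNIV :: 'k set))"
      unfolding dimle_def
    proof (intro allI impI)
      fix S' assume "S' \<subseteq> V" "lin_indep S'"
      then have "card S' \<le> card (range c)"
        by (intro lin_indep_card_span) (use fin synth_span[OF fin] in \<open>auto simp: V_def\<close>)
      also have "\<dots> \<le> card (UNIV :: 'k set)" by (rule card_image_le[OF fin])
      finally show "card S' \<le> card (UNIV :: 'k set)" .
    qed
    have "l2_closure {gram c x |x. l2 x} \<subseteq> l2_closure V"
      unfolding l2_closure_def V_def gram_def using adjc_l2[OF c] by blast
    also have "\<dots> \<subseteq> V" by (rule closure_subsp[OF sV dV])
    finally have "card S \<le> card (UNIV :: 'k set)" using dV S(1,2) unfolding dimle_def by blast
    then show ?thesis using S(3) by simp
  qed simp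
qed

lemma inj_from_bound:
  assumes "finite (UNIV :: 'a set) \<Longrightarrow> n \<le> card (UNIV :: 'a set)"
  shows "\<exists>f :: nat \<Rightarrow> 'a. inj_on f {..<n}"
proof (cases "finite (UNIV :: 'a set)")
  case True
  obtain f :: "nat \<Rightarrow> 'a" where f: "bij_betw f {0..<card (UNIV :: 'a set)} UNIV"
    using ex_bij_betw_nat_finite[OF True] by blast
  have "inj_on f {..<n}"
    by (rule inj_on_subset[OF bij_betw_imp_inj_on[OF f]]) (use assms True in auto)
  then show ?thesis by blast
next
  case False
  then obtain f :: "nat \<Rightarrow> 'a" where "inj f" using infinite_countable_subset by blast
  then show ?thesis by (meson inj_on_subset subset_UNIV)
qed

lemma infinite_from_bound:
  assumes "\<And>n. finite (UNIV :: 'a set) \<Longrightarrow> n \<le> card (UNIV :: 'a set)"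
  shows "\<exists>f :: nat \<Rightarrow> 'a. inj f"
proof -
  have "infinite (UNIV :: 'a set)" using assms[of "Suc (card (UNIV :: 'a set))"] by auto
  then show ?thesis using infinite_countable_subset by blast
qed

context
  fixes D :: "nat set" and g :: "nat \<Rightarrow> 'k" and h :: "nat \<Rightarrow> 'i" and h' :: "nat \<Rightarrow> 'j"
    and \<sigma> :: "nat \<Rightarrow> real"
  assumes ig: "inj_on g D" and ih: "inj_on h D" and ih': "inj_on h' D"
    and sp: "\<And>t. t \<in> D \<Longrightarrow> \<sigma> t > 0"
    and ss: "(\<lambda>t. (\<sigma> t)^2) summable_on D"
begin


lemma ha: "hsf (dfam D g h \<sigma>)" by (rule dfam_hsf[OF ig ih sp ss])
lemma hb: "hsf (dfam D g h' \<sigma>)" by (rule dfam_hsf[OF ig ih' sp ss])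

definition wit :: "nat set \<Rightarrow> 'i \<times> 'j \<Rightarrow> complex" where
  "wit E = (\<lambda>p. \<Sum>t\<in>E. complex_of_real (1 / (\<sigma> t)^2) * ket (h t, h' t) p)"

lemma wit_l2: "finite E \<Longrightarrow> l2 (wit E)"
  unfolding wit_def by (intro l2_sum l2_scale l2_ket)

lemma wit_M:
  assumes E: "finite E" "E \<subseteq> D"
  shows "Mx (dfam D g h \<sigma>) (dfam D g h' \<sigma>) (wit E) (k, l) = (if \<exists>t\<in>E. k = g t \<and> l = g t then 1 else 0)"
proof -
  have pl: "l2 (phi (dfam D g h \<sigma>) (dfam D g h' \<sigma>) (k, l))" by (rule phi_l2[OF ha hb])
  have "Mx (dfam D g h \<sigma>) (dfam D g h' \<sigma>) (wit E) (k, l) = l2_inner (wit E) (phi (dfam D g h \<sigma>) (dfam D g h' \<sigma>) (k, l))"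
    unfolding Mx_def ..
  also have "\<dots> = (\<Sum>t\<in>E. complex_of_real (1 / (\<sigma> t)^2) * l2_inner (ket (h t, h' t)) (phi (dfam D g h \<sigma>) (dfam D g h' \<sigma>) (k, l)))"
  proof -
    have "l2_inner (wit E) (phi (dfam D g h \<sigma>) (dfam D g h' \<sigma>) (k, l)) =
      (\<Sum>t\<in>E. l2_inner (\<lambda>p. complex_of_real (1 / (\<sigma> t)^2) * ket (h t, h' t) p) (phi (dfam D g h \<sigma>) (dfam D g h' \<sigma>) (k, l)))"
      unfolding wit_def by (rule inner_sum_left) (use E(1) pl in \<open>auto intro!: l2_scale l2_ket simp del: of_real_divide of_real_power\<close>)
    then show ?thesis by (simp only: inner_scale_left)
  qed
  also have "\<dots> = (\<Sum>t\<in>E. if k = g t \<and> l = g t then 1 else 0)"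
  proof (rule sum.cong[OF refl])
    fix t assume t: "t \<in> E"
    then have tD: "t \<in> D" using E(2) by auto
    have "phi (dfam D g h \<sigma>) (dfam D g h' \<sigma>) (k, l) (h t, h' t) = (dfam D g h \<sigma>) k (h t) * (dfam D g h' \<sigma>) l (h' t)" by (simp add: phi_def)
    also have "\<dots> = (if k = g t then complex_of_real (\<sigma> t) else 0) * (if l = g t then complex_of_real (\<sigma> t) else 0)"
      using dfam_at[OF ig ih sp ss tD, of k] dfam_at[OF ig ih' sp ss tD, of l] by simp
    finally have e: "phi (dfam D g h \<sigma>) (dfam D g h' \<sigma>) (k, l) (h t, h' t) = (if k = g t \<and> l = g t then complex_of_real ((\<sigma> t)^2) else 0)"
      by (simp add: power2_eq_square)
    show "complex_of_real (1 / (\<sigma> t)^2) * l2_inner (ket (h t, h' t)) (phi (dfam D g h \<sigma>) (dfam D g h' \<sigma>) (k, l))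
          = (if k = g t \<and> l = g t then 1 else 0)"
      unfolding inner_ket_left e using sp[OF tD] by (auto simp: field_simps)
  qed
  also have "\<dots> = (if \<exists>t\<in>E. k = g t \<and> l = g t then 1 else 0)"
  proof (cases "\<exists>t\<in>E. k = g t \<and> l = g t")
    case True
    then obtain t0 where t0: "t0 \<in> E" "k = g t0" "l = g t0" by blast
    have "(\<Sum>t\<in>E. if k = g t \<and> l = g t then 1 else 0) = (\<Sum>t\<in>E. if t = t0 then 1 else (0::complex))"
    proof (rule sum.cong[OF refl])
      fix t assume "t \<in> E"
      then have "g t = g t0 \<longleftrightarrow> t = t0" using t0(1) E(2) ig by (auto dest: inj_onD)
      then show "(if k = g t \<and> l = g t then 1 else 0) = (if t = t0 then 1 else (0::complex))"
        using t0 by auto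
    qed
    also have "\<dots> = 1" using t0(1) E(1) by simp
    finally show ?thesis using True by simp
  next
    case False
    then show ?thesis by (auto intro!: sum.neutral)
  qed
  finally show ?thesis .
qed

lemma wit_F:
  assumes E: "finite E" "E \<subseteq> D"
  shows "Fw (dfam D g h \<sigma>) (dfam D g h' \<sigma>) (wit E) = real (card E)"
proof -
  define G where "G = (\<lambda>t. (g t, g t)) ` E"
  have injG: "inj_on (\<lambda>t. (g t, g t)) E"
    using ig E(2) by (auto simp: inj_on_def)
  have e: "(cmod (Mx (dfam D g h \<sigma>) (dfam D g h' \<sigma>) (wit E) kl))^2 = (if kl \<in> G then 1 else 0)" for kl
    by (cases kl) (auto simp: wit_M[OF E] G_def)
  have "Fw (dfam D g h \<sigma>) (dfam D g h' \<sigma>) (wit E) = infsum (\<lambda>kl. if kl \<in> G then 1 else (0::real)) UNIV"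
    unfolding Fw_def[OF ha hb] e ..
  also have "\<dots> = infsum (\<lambda>kl. if kl \<in> G then 1 else (0::real)) G"
    by (rule infsum_cong_neutral) auto
  also have "\<dots> = real (card G)" using E(1) by (simp add: G_def)
  also have "card G = card E" unfolding G_def by (rule card_image[OF injG])
  finally show ?thesis .
qed

lemma wit_T:
  assumes E: "finite E" "E \<subseteq> D"
  shows "infsum (\<lambda>k. Mx (dfam D g h \<sigma>) (dfam D g h' \<sigma>) (wit E) (k, k)) UNIV = complex_of_real (real (card E))"
proof -
  have e: "Mx (dfam D g h \<sigma>) (dfam D g h' \<sigma>) (wit E) (k, k) = (if k \<in> g ` E then 1 else 0)" for k
    by (auto simp: wit_M[OF E])
  have "infsum (\<lambda>k. Mx (dfam D g h \<sigma>) (dfam D g h' \<sigma>) (wit E) (k, k)) UNIV = infsum (\<lambda>k. if k \<in> g ` E then 1 else (0::complex)) (g ` E)"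
    unfolding e by (rule infsum_cong_neutral) auto
  also have "\<dots> = of_nat (card (g ` E))" using E(1) by simp
  also have "card (g ` E) = card E" using inj_on_subset[OF ig E(2)] by (rule card_image)
  finally show ?thesis by simp
qed

lemma wit_violation:
  assumes E: "finite E" "E \<subseteq> D" "E \<noteq> {}" and c: "c * real (card E) > 1"
  shows "\<not> loewner_ge (Xw (dfam D g h \<sigma>) (dfam D g h' \<sigma>)) (scale_op c (theta (vv (dfam D g h \<sigma>) (dfam D g h' \<sigma>)) (vv (dfam D g h \<sigma>) (dfam D g h' \<sigma>))))"
proof
  assume "loewner_ge (Xw (dfam D g h \<sigma>) (dfam D g h' \<sigma>)) (scale_op c (theta (vv (dfam D g h \<sigma>) (dfam D g h' \<sigma>)) (vv (dfam D g h \<sigma>) (dfam D g h' \<sigma>))))"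
  then have "0 \<le> l2_inner (\<lambda>p. Xw (dfam D g h \<sigma>) (dfam D g h' \<sigma>) (wit E) p - scale_op c (theta (vv (dfam D g h \<sigma>) (dfam D g h' \<sigma>)) (vv (dfam D g h \<sigma>) (dfam D g h' \<sigma>))) (wit E) p) (wit E)"
    unfolding loewner_ge_def using wit_l2[OF E(1)] by blast
  then have "0 \<le> real (card E) - c * (real (card E))^2"
    unfolding loewner_form[OF ha hb wit_l2[OF E(1)]] wit_F[OF E(1,2)] wit_T[OF E(1,2)]
    by (simp add: less_eq_complex_def)
  moreover have "card E > 0" using E(1,3) by (simp add: card_gt_0_iff)
  ultimately show False using c by (simp add: power2_eq_square)
qed

lemma wit_ops:
  assumes "D \<noteq> {}"
  shows "hs_op (synth (dfam D g h \<sigma>))" "hs_op_conj (opB (dfam D g h' \<sigma>))" "nonzero_op (synth (dfam D g h \<sigma>))" "nonzero_op (opB (dfam D g h' \<sigma>))"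
    and "min_rank (synth (dfam D g h \<sigma>)) (opB (dfam D g h' \<sigma>)) = min (op_rank (gram (dfam D g h \<sigma>))) (op_rank (gram (dfam D g h' \<sigma>)))"
    and "tensor_op (AAs (synth (dfam D g h \<sigma>))) (BBs (opB (dfam D g h' \<sigma>))) = Xw (dfam D g h \<sigma>) (dfam D g h' \<sigma>)"
    and "vec (opB (dfam D g h' \<sigma>) \<circ> transp (synth (dfam D g h \<sigma>))) = vv (dfam D g h \<sigma>) (dfam D g h' \<sigma>)"
proof -
  show hA: "hs_op (synth (dfam D g h \<sigma>))" by (rule hs_synth[OF ha])
  show hB: "hs_op_conj (opB (dfam D g h' \<sigma>))" by (rule hs_opB[OF hb])
  have ea: "(\<lambda>k. synth (dfam D g h \<sigma>) (ket k)) = (dfam D g h \<sigma>)" by (simp add: synth_ket)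
  have eb: "(\<lambda>k. opB (dfam D g h' \<sigma>) (ket k)) = (dfam D g h' \<sigma>)" by (simp add: opB_ket)
  obtain t where t: "t \<in> D" using assms by blast
  have kt: "ket (h t) \<noteq> (\<lambda>_. 0)" "ket (h' t) \<noteq> (\<lambda>_. 0)" by (auto simp: ket_def fun_eq_iff)
  show "nonzero_op (synth (dfam D g h \<sigma>))"
    unfolding nonzero_op_def
    using sp[OF t] kt(1) by (intro exI[of _ "ket (g t)"]) (auto simp: synth_ket dfam_g[OF ig ih sp ss t] fun_eq_iff)
  show "nonzero_op (opB (dfam D g h' \<sigma>))"
    unfolding nonzero_op_def
    using sp[OF t] kt(2) by (intro exI[of _ "ket (g t)"]) (auto simp: opB_ket dfam_g[OF ig ih' sp ss t] fun_eq_iff)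
  show "min_rank (synth (dfam D g h \<sigma>)) (opB (dfam D g h' \<sigma>)) = min (op_rank (gram (dfam D g h \<sigma>))) (op_rank (gram (dfam D g h' \<sigma>)))"
    unfolding min_rank_def rank_A[OF hA] rank_B[OF hB] ea eb ..
  show "tensor_op (AAs (synth (dfam D g h \<sigma>))) (BBs (opB (dfam D g h' \<sigma>))) = Xw (dfam D g h \<sigma>) (dfam D g h' \<sigma>)"
    using tensor_eq[OF hA hB] unfolding ea eb .
  show "vec (opB (dfam D g h' \<sigma>) \<circ> transp (synth (dfam D g h \<sigma>))) = vv (dfam D g h \<sigma>) (dfam D g h' \<sigma>)"
    using vec_eq[OF hA hB] unfolding ea eb .
qed

end

lemma construct:
  fixes D :: "nat set" and g :: "nat \<Rightarrow> 'k" and h :: "nat \<Rightarrow> 'i" and h' :: "nat \<Rightarrow> 'j"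
    and \<sigma> :: "nat \<Rightarrow> real"
  assumes ig: "inj_on g D" and ih: "inj_on h D" and ih': "inj_on h' D"
    and sp: "\<And>t. t \<in> D \<Longrightarrow> \<sigma> t > 0"
    and ss: "(\<lambda>t. (\<sigma> t)^2) summable_on D"
    and E: "finite E" "E \<subseteq> D" "E \<noteq> {}" and c: "c * real (card E) > 1"
  shows "\<exists>(A :: ('k \<Rightarrow> complex) \<Rightarrow> ('i \<Rightarrow> complex)) (B :: ('k \<Rightarrow> complex) \<Rightarrow> ('j \<Rightarrow> complex)).
              hs_op A \<and> hs_op_conj B \<and> nonzero_op A \<and> nonzero_op B \<and>
              min_rank A B = min (op_rank (gram (dfam D g h \<sigma>))) (op_rank (gram (dfam D g h' \<sigma>))) \<and>
              \<not> loewner_ge (tensor_op (AAs A) (BBs B))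
                     (scale_op c (theta (vec (B \<circ> transp A)) (vec (B \<circ> transp A))))"
proof -
  have D: "D \<noteq> {}" using E by auto
  note ops = wit_ops[OF ig ih ih' sp ss D]
  show ?thesis
    by (rule exI[of _ "synth (dfam D g h \<sigma>)"], rule exI[of _ "opB (dfam D g h' \<sigma>)"])
       (use ops wit_violation[OF ig ih ih' sp ss E c] in simp)
qed

lemma part2:
  fixes A0 :: "('k \<Rightarrow> complex) \<Rightarrow> ('i \<Rightarrow> complex)" and B0 :: "('k \<Rightarrow> complex) \<Rightarrow> ('j \<Rightarrow> complex)"
  assumes A0: "hs_op A0" and B0: "hs_op_conj B0" and nA: "nonzero_op A0" and nB: "nonzero_op B0"
    and c: "c > inv_enat (min_rank A0 B0)"
  shows "\<exists>(A :: ('k \<Rightarrow> complex) \<Rightarrow> ('i \<Rightarrow> complex)) (B :: ('k \<Rightarrow> complex) \<Rightarrow> ('j \<Rightarrow> complex)).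
              hs_op A \<and> hs_op_conj B \<and> nonzero_op A \<and> nonzero_op B \<and> min_rank A B = min_rank A0 B0 \<and>
              \<not> loewner_ge (tensor_op (AAs A) (BBs B))
                     (scale_op c (theta (vec (B \<circ> transp A)) (vec (B \<circ> transp A))))"
proof -
  define a0 where "a0 = (\<lambda>k. A0 (ket k))"
  define b0 where "b0 = (\<lambda>k. B0 (ket k))"
  have ha0: "hsf a0" unfolding a0_def by (rule hs_hsf[OF A0])
  have hb0: "hsf b0" unfolding b0_def by (rule hs_conj_hsf[OF B0])
  have mr0: "min_rank A0 B0 = min (op_rank (gram a0)) (op_rank (gram b0))"
    unfolding min_rank_def a0_def b0_def rank_A[OF A0] rank_B[OF B0] ..
  obtain ka where "a0 ka \<noteq> (\<lambda>_. 0)" using nonzero_A[OF A0 nA] unfolding a0_def by blast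
  then have ra1: "enat 1 \<le> op_rank (gram a0)" by (rule rank_ge1[OF ha0])
  obtain kb where "b0 kb \<noteq> (\<lambda>_. 0)" using nonzero_B[OF B0 nB] unfolding b0_def by blast
  then have rb1: "enat 1 \<le> op_rank (gram b0)" by (rule rank_ge1[OF hb0])
  show ?thesis
  proof (cases "min_rank A0 B0")
    case (enat n)
    have ra: "enat n \<le> op_rank (gram a0)" and rb: "enat n \<le> op_rank (gram b0)"
      using enat mr0 by (metis min.cobounded1 min.cobounded2)+
    have n1: "n \<ge> 1" using enat mr0 ra1 rb1 by (metis enat_ord_simps(1) min_def)
    obtain g :: "nat \<Rightarrow> 'k" where g: "inj_on g {..<n}"
      using inj_from_bound[OF type_bounds(2)[OF ha0 ra]] by blast
    obtain h :: "nat \<Rightarrow> 'i" where h: "inj_on h {..<n}"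
      using inj_from_bound[OF type_bounds(1)[OF ha0 ra]] by blast
    obtain h' :: "nat \<Rightarrow> 'j" where h': "inj_on h' {..<n}"
      using inj_from_bound[OF type_bounds(1)[OF hb0 rb]] by blast
    define \<sigma> :: "nat \<Rightarrow> real" where "\<sigma> = (\<lambda>_. 1)"
    have sp: "\<And>t. t \<in> {..<n} \<Longrightarrow> \<sigma> t > 0" unfolding \<sigma>_def by simp
    have ss: "(\<lambda>t. (\<sigma> t)^2) summable_on {..<n}" by simp
    have cn: "c * real (card {..<n}) > 1"
      using c enat n1 by (simp add: inv_enat_def field_simps)
    have "0 \<in> {..<n}" using n1 by simp
    then have E: "finite {..<n}" "{..<n} \<subseteq> {..<n}" "{..<n} \<noteq> {}" by auto
    have r1: "op_rank (gram (dfam {..<n} g h \<sigma>)) = enat n"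
      using rank_dfam_fin[OF g h sp ss] by simp
    have r2: "op_rank (gram (dfam {..<n} g h' \<sigma>)) = enat n"
      using rank_dfam_fin[OF g h' sp ss] by simp
    show ?thesis using construct[OF g h h' sp ss E cn] unfolding r1 r2 enat by simp
  next
    case infinity
    have ra: "enat N \<le> op_rank (gram a0)" and rb: "enat N \<le> op_rank (gram b0)" for N
      using infinity mr0 by (metis enat_ord_code(3) min.cobounded1 min.cobounded2 order_trans)+
    obtain g :: "nat \<Rightarrow> 'k" where g: "inj g"
      using infinite_from_bound[OF type_bounds(2)[OF ha0 ra]] by blast
    obtain h :: "nat \<Rightarrow> 'i" where h: "inj h"
      using infinite_from_bound[OF type_bounds(1)[OF ha0 ra]] by blast
    obtain h' :: "nat \<Rightarrow> 'j" where h': "inj h'"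
      using infinite_from_bound[OF type_bounds(1)[OF hb0 rb]] by blast
    define \<sigma> :: "nat \<Rightarrow> real" where "\<sigma> = (\<lambda>t. (1/2)^t)"
    have sp: "\<And>t. t \<in> UNIV \<Longrightarrow> \<sigma> t > 0" unfolding \<sigma>_def by simp
    have eq: "(\<sigma> t)^2 = (1/4)^t" for t
      unfolding \<sigma>_def by (simp add: power2_eq_square power_mult_distrib[symmetric])
    have ss: "(\<lambda>t. (\<sigma> t)^2) summable_on UNIV"
      unfolding eq by (rule summable_nonneg_imp_summable_on) (auto intro: summable_geometric)
    have c0: "c > 0" using c infinity by (simp add: inv_enat_def)
    obtain N :: nat where N: "1 / c < real N" using reals_Archimedean2 by blast
    have N1: "N \<ge> 1" using N c0 by (cases N) (auto simp: field_simps)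
    have cn: "c * real (card {..<N}) > 1" using N c0 by (simp add: field_simps)
    have "0 \<in> {..<N}" using N1 by simp
    then have E: "finite {..<N}" "{..<N} \<subseteq> UNIV" "{..<N} \<noteq> {}" by auto
    have r1: "op_rank (gram (dfam UNIV g h \<sigma>)) = \<infinity>"
      using infinite_UNIV_nat by (intro rank_dfam_inf[OF g h sp ss]) auto
    have r2: "op_rank (gram (dfam UNIV g h' \<sigma>)) = \<infinity>"
      using infinite_UNIV_nat by (intro rank_dfam_inf[OF g h' sp ss]) auto
    show ?thesis using construct[OF g h h' sp ss E cn] unfolding r1 r2 infinity by simp
  qed
qed

theorem theorem1p5:
  shows
  "(\<forall>(A :: ('k \<Rightarrow> complex) \<Rightarrow> ('i \<Rightarrow> complex)) (B :: ('k \<Rightarrow> complex) \<Rightarrow> ('j \<Rightarrow> complex)).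
      hs_op A \<and> hs_op_conj B \<and> nonzero_op A \<and> nonzero_op B \<longrightarrow>
        loewner_ge (tensor_op (AAs A) (BBs B))
                   (scale_op (inv_enat (min_rank A B)) (theta (vec (B \<circ> transp A)) (vec (B \<circ> transp A))))
      \<and> loewner_ge (scale_op (inv_enat (min_rank A B)) (theta (vec (B \<circ> transp A)) (vec (B \<circ> transp A))))
                   zero_op)
   \<and>
   (\<forall>m. (\<exists>(A :: ('k \<Rightarrow> complex) \<Rightarrow> ('i \<Rightarrow> complex)) (B :: ('k \<Rightarrow> complex) \<Rightarrow> ('j \<Rightarrow> complex)).
            hs_op A \<and> hs_op_conj B \<and> nonzero_op A \<and> nonzero_op B \<and> min_rank A B = m) \<longrightarrow>
        (\<forall>c. c > inv_enat m \<longrightarrow>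
           (\<exists>(A :: ('k \<Rightarrow> complex) \<Rightarrow> ('i \<Rightarrow> complex)) (B :: ('k \<Rightarrow> complex) \<Rightarrow> ('j \<Rightarrow> complex)).
              hs_op A \<and> hs_op_conj B \<and> nonzero_op A \<and> nonzero_op B \<and> min_rank A B = m \<and>
              \<not> loewner_ge (tensor_op (AAs A) (BBs B))
                     (scale_op c (theta (vec (B \<circ> transp A)) (vec (B \<circ> transp A)))))))"
proof (intro conjI allI impI)
  fix A :: "('k \<Rightarrow> complex) \<Rightarrow> ('i \<Rightarrow> complex)" and B :: "('k \<Rightarrow> complex) \<Rightarrow> ('j \<Rightarrow> complex)"
  assume h: "hs_op A \<and> hs_op_conj B \<and> nonzero_op A \<and> nonzero_op B"
  show "loewner_ge (tensor_op (AAs A) (BBs B))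
                   (scale_op (inv_enat (min_rank A B)) (theta (vec (B \<circ> transp A)) (vec (B \<circ> transp A))))"
    using part1[of A B] h by blast
  show "loewner_ge (scale_op (inv_enat (min_rank A B)) (theta (vec (B \<circ> transp A)) (vec (B \<circ> transp A))))
                   zero_op"
    using part1[of A B] h by blast
next
  fix m c
  assume ex: "\<exists>(A :: ('k \<Rightarrow> complex) \<Rightarrow> ('i \<Rightarrow> complex)) (B :: ('k \<Rightarrow> complex) \<Rightarrow> ('j \<Rightarrow> complex)).
            hs_op A \<and> hs_op_conj B \<and> nonzero_op A \<and> nonzero_op B \<and> min_rank A B = m"
    and c: "c > inv_enat m"
  obtain A0 :: "('k \<Rightarrow> complex) \<Rightarrow> ('i \<Rightarrow> complex)" and B0 :: "('k \<Rightarrow> complex) \<Rightarrow> ('j \<Rightarrow> complex)"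
    where h0: "hs_op A0" "hs_op_conj B0" "nonzero_op A0" "nonzero_op B0" "min_rank A0 B0 = m"
    using ex by blast
  show "\<exists>(A :: ('k \<Rightarrow> complex) \<Rightarrow> ('i \<Rightarrow> complex)) (B :: ('k \<Rightarrow> complex) \<Rightarrow> ('j \<Rightarrow> complex)).
              hs_op A \<and> hs_op_conj B \<and> nonzero_op A \<and> nonzero_op B \<and> min_rank A B = m \<and>
              \<not> loewner_ge (tensor_op (AAs A) (BBs B))
                     (scale_op c (theta (vec (B \<circ> transp A)) (vec (B \<circ> transp A))))"
    using part2[OF h0(1-4)] c h0(5) by blast
qed

end
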